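(* Let $\delta=x^{\mathbf d}f(\theta)$ be a homogeneous differential operator of degree $\mathbf d$ with $-\mathbf d$ in the interior of $\sigma^\vee$, and write $\mathbf d=q\mathbf e$ with $q\in\mathbb Z_{\ge1}$ and $\mathbf e\in\mathbb Z^d$ primitive. Then $\delta$ fixes some nonzero monomial ideal of $R$ if and only if (1) $\operatorname{val}(\mathbf a)>-\infty$ for all $\mathbf a\in S$; (2) for all $\mathbf a\in V'_{\mathrm{mon}}(f)$ and $i=0,\dots,q-1$, $\mathbf a-i\mathbf e\in V_{\mathrm{mon}}(f)$; (3) for all $\mathbf a,\mathbf b\in V'_{\mathrm{mon}}(f)$, $\mathbf a-\mathbf b\notin S-\mathbf e$. In this case the only nonzero monomial ideal fixed by $\delta$ is $I=(x^{\mathbf a}\mid\mathbf a\in V'_{\mathrm{mon}}(f)\cap S)$, and $\operatorname{Exp} I=\{\mathbf a\in S:\operatorname{pval}(\mathbf a)\ge 0\}$.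
   Context: Standing notation. Fix $d\ge 1$. Let $\sigma\subseteq\mathbb R^d$ be a full-dimensional, strongly convex rational polyhedral cone, so $\sigma^\vee$ is full-dimensional and strongly convex. $S=\sigma^\vee\cap\mathbb Z^d$, $R=\mathbb C[S]$ with monomial basis $x^{\mathbf a}$, $\mathbf a\in S$. $h_1,\dots,h_n$ are the primitive support functions of the facets of $\sigma^\vee$, so $S=\{\mathbf a\in\mathbb Z^d:h_i(\mathbf a)\ge0\ \forall i\}$. $(g,m)!=\prod_{j=0}^m(g-j)$ for $m\ge0$, $=1$ for $m<0$; $H_{\mathbf d}=\prod_i(h_i,h_i(-\mathbf d)-1)!$. For $f$ divisible by $H_{\mathbf d}$, $\delta=x^{\mathbf d}f(\theta)$ acts by $\delta(x^{\mathbf a})=f(\mathbf a)x^{\mathbf a+\mathbf d}$. $\operatorname{Exp} I=\{\mathbf a\in S:x^{\mathbf a}\in I\}$; $I$ is $\delta$-fixed if $\delta(I)=I$. $V_{\mathrm{mon}}(f)=\{\mathbf a\in\mathbb Z^d:f(\mathbf a)=0\}$; $S-\mathbf e=\{\mathbf s-\mathbf e:\mathbf s\in S\}$. For $\mathbf a\in\mathbb Z^d$, $\operatorname{val}(\mathbf a)=\inf\{t\in\mathbb R:\mathbf a+t\mathbf d\in V_{\mathrm{mon}}(f)\}\in\mathbb R\cup\{\pm\infty\}$ ($\inf\emptyset=+\infty$). When $\operatorname{val}(\mathbf a)$ is finite, $\operatorname{pval}(\mathbf a)=\max\{t\in[\operatorname{val}(\mathbf a),\operatorname{val}(\mathbf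 a)+1):\mathbf a+t\mathbf d\in V_{\mathrm{mon}}(f)\}$ and $\operatorname{vpt}(\mathbf a)=\mathbf a+\operatorname{pval}(\mathbf a)\mathbf d$. $V'_{\mathrm{mon}}(f)=\{\operatorname{vpt}(\mathbf a):\mathbf a\in\mathbb Z^d,\ \operatorname{val}(\mathbf a)\text{ finite}\}$. *)

theory Defs
  imports "HOL-Analysis.Analysis"
begin

definition rvec :: "int ^ 'n \<Rightarrow> real ^ 'n" where
  "rvec a = (\<chi> i. real_of_int (a $ i))"

definition cvec :: "int ^ 'n \<Rightarrow> complex ^ 'n" where
  "cvec a = (\<chi> i. complex_of_int (a $ i))"

definition primitive :: "int ^ 'n \<Rightarrow> bool" where
  "primitive e \<longleftrightarrow> (\<forall>k::int. (\<forall>i. k dvd e $ i) \<longrightarrow> k dvd 1)"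

definition rational_polyhedral_cone :: "(real ^ 'n) set \<Rightarrow> bool" where
  "rational_polyhedral_cone C \<longleftrightarrow>
     (\<exists>G :: (int ^ 'n) set. finite G \<and>
        C = {\<Sum>g\<in>G. c g *\<^sub>R rvec g | c. \<forall>g\<in>G. 0 \<le> c g})"

definition strongly_convex :: "(real ^ 'n) set \<Rightarrow> bool" where
  "strongly_convex C \<longleftrightarrow> C \<inter> uminus ` C = {0}"

definition full_dimensional :: "(real ^ 'n) set \<Rightarrow> bool" where
  "full_dimensional C \<longleftrightarrow> aff_dim C = int CARD('n)"

definition dual_cone :: "(real ^ 'n) set \<Rightarrow> (real ^ 'n) set" where
  "dual_cone C = {y. \<forall>x\<in>C. 0 \<le> x \<bullet> y}"

(* Primitive support functions of the facets of a cone C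
  (here applied to \<sigma>\<^sup>\<vee>): a primitive lattice vector h, with
  h(a) = h \<bullet> a, nonnegative on C whose zero set on C is a facet. *)
definition facet_support_functions :: "(real ^ 'n) set \<Rightarrow> (int ^ 'n) set" where
  "facet_support_functions C =
     {h. primitive h \<and> (\<forall>y\<in>C. 0 \<le> rvec h \<bullet> y) \<and> {y\<in>C. rvec h \<bullet> y = 0} facet_of C}"

definition lin_int :: "int ^ 'n \<Rightarrow> int ^ 'n \<Rightarrow> int" where
  "lin_int h a = (\<Sum>i\<in>UNIV. h $ i * a $ i)"

definition lin_cplx :: "int ^ 'n \<Rightarrow> complex ^ 'n \<Rightarrow> complex" where
  "lin_cplx h x = (\<Sum>i\<in>UNIV. complex_of_int (h $ i) * x $ i)"

definition semigrp :: "(real ^ 'n) set \<Rightarrow> (int ^ 'n) set" where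
  "semigrp \<sigma> = {a. rvec a \<in> dual_cone \<sigma>}"

section \<open>Polynomials in \<theta> (as polynomial functions on C^d)\<close>

definition poly_fun :: "(complex ^ 'n \<Rightarrow> complex) \<Rightarrow> bool" where
  "poly_fun F \<longleftrightarrow> (\<exists>c :: nat ^ 'n \<Rightarrow> complex. finite {\<alpha>. c \<alpha> \<noteq> 0} \<and>
      F = (\<lambda>x. \<Sum>\<alpha>\<in>{\<alpha>. c \<alpha> \<noteq> 0}. c \<alpha> * (\<Prod>i\<in>UNIV. x $ i ^ (\<alpha> $ i))))"

definition ffact :: "complex \<Rightarrow> int \<Rightarrow> complex" where
  "ffact g m = (if m < 0 then 1 else (\<Prod>j\<in>{0..m}. g - of_int j))"

definition Hpoly :: "(real ^ 'n) set \<Rightarrow> int ^ 'n \<Rightarrow> complex ^ 'n \<Rightarrow> complex" where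
  "Hpoly \<sigma> d x = (\<Prod>h\<in>facet_support_functions (dual_cone \<sigma>).
       ffact (lin_cplx h x) (lin_int h (- d) - 1))"

definition poly_dvd :: "(complex ^ 'n \<Rightarrow> complex) \<Rightarrow> (complex ^ 'n \<Rightarrow> complex) \<Rightarrow> bool" where
  "poly_dvd G F \<longleftrightarrow> (\<exists>Q. poly_fun Q \<and> (\<forall>x. F x = G x * Q x))"

definition ringR :: "(int ^ 'n) set \<Rightarrow> (int ^ 'n \<Rightarrow> complex) set" where
  "ringR S = {p. finite {a. p a \<noteq> 0} \<and> (\<forall>a. p a \<noteq> 0 \<longrightarrow> a \<in> S)}"

definition xmono :: "int ^ 'n \<Rightarrow> (int ^ 'n \<Rightarrow> complex)" where
  "xmono a = (\<lambda>c. if c = a then 1 else 0)"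

definition rmult :: "(int ^ 'n \<Rightarrow> complex) \<Rightarrow> (int ^ 'n \<Rightarrow> complex) \<Rightarrow> (int ^ 'n \<Rightarrow> complex)" where
  "rmult p q = (\<lambda>c. \<Sum>a\<in>{a. p a \<noteq> 0}. p a * q (c - a))"

definition is_ideal :: "(int ^ 'n) set \<Rightarrow> (int ^ 'n \<Rightarrow> complex) set \<Rightarrow> bool" where
  "is_ideal S I \<longleftrightarrow> I \<subseteq> ringR S \<and> (\<lambda>c. 0) \<in> I \<and> (\<forall>p\<in>I. \<forall>q\<in>I. (\<lambda>c. p c + q c) \<in> I)
      \<and> (\<forall>r\<in>ringR S. \<forall>p\<in>I. rmult r p \<in> I)"

definition mono_gen_ideal :: "(int ^ 'n) set \<Rightarrow> (int ^ 'n) set \<Rightarrow> (int ^ 'n \<Rightarrow> complex) set" where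
  "mono_gen_ideal S X = \<Inter>{J. is_ideal S J \<and> (\<forall>a\<in>X. xmono a \<in> J)}"

definition monomial_ideal :: "(int ^ 'n) set \<Rightarrow> (int ^ 'n \<Rightarrow> complex) set \<Rightarrow> bool" where
  "monomial_ideal S I \<longleftrightarrow> (\<exists>X\<subseteq>S. I = mono_gen_ideal S X)"

definition Exp :: "(int ^ 'n) set \<Rightarrow> (int ^ 'n \<Rightarrow> complex) set \<Rightarrow> (int ^ 'n) set" where
  "Exp S I = {a\<in>S. xmono a \<in> I}"

(* The operator \<delta> = x^d f(\<theta>): \<delta>(x^a) = f(a) x^(a+d), extended linearly. *)
definition delta_op :: "int ^ 'n \<Rightarrow> (complex ^ 'n \<Rightarrow> complex) \<Rightarrow> (int ^ 'n \<Rightarrow> complex) \<Rightarrow> (int ^ 'n \<Rightarrow> complex)" where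
  "delta_op d f p = (\<lambda>c. f (cvec (c - d)) * p (c - d))"

definition Vmon :: "(complex ^ 'n \<Rightarrow> complex) \<Rightarrow> (int ^ 'n) set" where
  "Vmon f = {a. f (cvec a) = 0}"

definition val :: "int ^ 'n \<Rightarrow> (complex ^ 'n \<Rightarrow> complex) \<Rightarrow> int ^ 'n \<Rightarrow> ereal" where
  "val d f a = Inf {ereal t | t. rvec a + t *\<^sub>R rvec d \<in> rvec ` Vmon f}"

definition pval :: "int ^ 'n \<Rightarrow> (complex ^ 'n \<Rightarrow> complex) \<Rightarrow> int ^ 'n \<Rightarrow> real" where
  "pval d f a = (let v = real_of_ereal (val d f a) in
      Max {t. v \<le> t \<and> t < v + 1 \<and> rvec a + t *\<^sub>R rvec d \<in> rvec ` Vmon f})"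

definition Vmon' :: "int ^ 'n \<Rightarrow> (complex ^ 'n \<Rightarrow> complex) \<Rightarrow> (int ^ 'n) set" where
  "Vmon' d f = {b. \<exists>a. val d f a \<noteq> \<infinity> \<and> val d f a \<noteq> -\<infinity> \<and>
                        rvec b = rvec a + pval d f a *\<^sub>R rvec d}"

end

theory Submission
  imports Defs
begin

lemma rvec_add: "rvec (a + b) = rvec a + rvec b"
  by (simp add: rvec_def vec_eq_iff)
lemma rvec_diff: "rvec (a - b) = rvec a - rvec b"
  by (simp add: rvec_def vec_eq_iff)
lemma rvec_uminus: "rvec (- a) = - rvec a"
  by (simp add: rvec_def vec_eq_iff)
lemma rvec_smult: "rvec (k *s a) = real_of_int k *\<^sub>R rvec a"
  by (simp add: rvec_def vec_eq_iff)
lemma rvec_zero: "rvec 0 = 0"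
  by (simp add: rvec_def vec_eq_iff)
lemma rvec_inj: "rvec a = rvec b \<Longrightarrow> a = b"
  by (simp add: rvec_def vec_eq_iff)
lemma rvec_inner: "rvec h \<bullet> rvec a = real_of_int (lin_int h a)"
  by (simp add: rvec_def inner_vec_def lin_int_def)
lemma lin_cplx_cvec: "lin_cplx h (cvec a) = complex_of_int (lin_int h a)"
  by (simp add: cvec_def lin_cplx_def lin_int_def)
lemma lin_int_add: "lin_int h (a + b) = lin_int h a + lin_int h b"
  by (simp add: lin_int_def sum.distrib algebra_simps)
lemma lin_int_uminus: "lin_int h (- a) = - lin_int h a"
  by (simp add: lin_int_def sum_negf)

lemma dual_scale: "y \<in> dual_cone s \<Longrightarrow> 0 \<le> c \<Longrightarrow> c *\<^sub>R y \<in> dual_cone s"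
  by (simp add: dual_cone_def)
lemma dual_add: "y \<in> dual_cone s \<Longrightarrow> z \<in> dual_cone s \<Longrightarrow> y + z \<in> dual_cone s"
  by (simp add: dual_cone_def inner_add_right)
lemma dual_zero: "0 \<in> dual_cone s"
  by (simp add: dual_cone_def)

lemma int_min_exists:
  fixes X :: "int set"
  assumes "X \<noteq> {}" "bdd_below X"
  shows "\<exists>k0\<in>X. \<forall>k\<in>X. k0 \<le> k"
proof -
  obtain b where b: "\<And>x. x \<in> X \<Longrightarrow> b \<le> x" using assms(2) by (auto simp: bdd_below_def)
  obtain x where x: "x \<in> X" using assms(1) by auto
  define N where "N = {n::nat. b + int n \<in> X}"
  have "nat (x - b) \<in> N" using b[OF x] x by (simp add: N_def)
  then have "(LEAST n. n \<in> N) \<in> N" by (rule LeastI)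
  moreover have "\<forall>k\<in>X. b + int (LEAST n. n \<in> N) \<le> k"
  proof
    fix k assume k: "k \<in> X"
    have "nat (k - b) \<in> N" using b[OF k] k by (simp add: N_def)
    then have "(LEAST n. n \<in> N) \<le> nat (k - b)" by (rule Least_le)
    then show "b + int (LEAST n. n \<in> N) \<le> k" using b[OF k] by linarith
  qed
  ultimately show ?thesis by (auto simp: N_def)
qed

locale mt =
  fixes \<sigma> :: "(real ^ 'n) set"
    and f :: "complex ^ 'n \<Rightarrow> complex"
    and d e :: "int ^ 'n"
    and q :: int
  assumes cone: "rational_polyhedral_cone \<sigma>"
    and full: "full_dimensional \<sigma>"
    and fdiv: "poly_dvd (Hpoly \<sigma> d) f"
    and dint: "rvec (- d) \<in> interior (dual_cone \<sigma>)"
    and q: "q \<ge> 1" and e: "primitive e" and de: "d = q *s e"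
begin

abbreviation "S \<equiv> semigrp \<sigma>"
abbreviation "C \<equiv> dual_cone \<sigma>"

lemma S0: "0 \<in> S" by (simp add: semigrp_def rvec_zero dual_zero)
lemma S_add: "a \<in> S \<Longrightarrow> b \<in> S \<Longrightarrow> a + b \<in> S"
  by (simp add: semigrp_def rvec_add dual_add)
lemma negd: "- d \<in> S" using dint interior_subset by (auto simp: semigrp_def)
lemma rvec_d: "rvec d = real_of_int q *\<^sub>R rvec e"
  by (simp add: de rvec_smult)
lemma nege: "- e \<in> S"
proof -
  have "rvec (- e) = (1 / real_of_int q) *\<^sub>R rvec (- d)"
    using q by (simp add: rvec_d rvec_uminus)
  then show ?thesis using negd q by (auto simp: semigrp_def intro!: dual_scale)
qed
lemma S_nmult: "0 \<le> n \<Longrightarrow> n *s a \<in> S" if "a \<in> S" for n :: int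
proof -
  have "int m *s a \<in> S" for m
  proof (induction m)
    case 0 then show ?case using S0 by (simp add: vec_eq_iff)
  next
    case (Suc m)
    have "int (Suc m) *s a = int m *s a + a" by (simp add: vec_eq_iff algebra_simps)
    then show ?case using Suc S_add that by simp
  qed
  then show "0 \<le> n \<Longrightarrow> n *s a \<in> S" by (metis nonneg_int_cases)
qed

lemma int_ball: obtains \<epsilon> where "\<epsilon> > 0" "ball (rvec (- d)) \<epsilon> \<subseteq> C"
  using dint by (meson mem_interior)

lemma G3: "\<exists>J::nat. \<forall>j\<ge>J. v - int j *s d \<in> S"
proof -
  obtain \<epsilon> where \<epsilon>: "\<epsilon> > 0" "ball (rvec (- d)) \<epsilon> \<subseteq> C" by (rule int_ball)
  obtain J :: nat where J: "norm (rvec v) / \<epsilon> < real J" using reals_Archimedean2 by blast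
  have "v - int j *s d \<in> S" if "J \<le> j" for j
  proof -
    have jpos: "real j > 0" using J that \<epsilon>(1)
      by (smt (verit, ccfv_SIG) divide_nonneg_pos norm_ge_zero of_nat_le_iff)
    define y where "y = rvec (- d) + (1 / real j) *\<^sub>R rvec v"
    have "dist (rvec (- d)) y = norm (rvec v) / real j"
      using jpos by (simp add: y_def dist_norm)
    also have "\<dots> < \<epsilon>"
      using J that jpos \<epsilon>(1) by (smt (verit, best) divide_less_eq mult.commute of_nat_le_iff pos_divide_less_eq)
    finally have "y \<in> C" using \<epsilon>(2) by auto
    then have "real j *\<^sub>R y \<in> C" by (rule dual_scale) simp
    moreover have "real j *\<^sub>R y = rvec (v - int j *s d)"
      using jpos by (simp add: y_def rvec_diff rvec_smult rvec_uminus scaleR_add_right algebra_simps)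
    ultimately show ?thesis by (simp add: semigrp_def)
  qed
  then show ?thesis by blast
qed

lemma sigma_nonzero: "\<exists>x\<in>\<sigma>. x \<noteq> 0"
proof (rule ccontr)
  assume "\<not> ?thesis"
  then have "\<sigma> = {} \<or> \<sigma> = {0}" by auto
  then have "aff_dim \<sigma> \<le> 0" by auto
  moreover have "CARD('n) > 0" by simp
  ultimately show False using full by (simp add: full_dimensional_def)
qed

lemma G2: "\<exists>J::nat. \<forall>j\<ge>J. a + int j *s d \<notin> S"
proof -
  obtain \<epsilon> where \<epsilon>: "\<epsilon> > 0" "ball (rvec (- d)) \<epsilon> \<subseteq> C" by (rule int_ball)
  obtain x where x: "x \<in> \<sigma>" "x \<noteq> 0" using sigma_nonzero by blast
  define y where "y = rvec (- d) - (\<epsilon> / 2 / norm x) *\<^sub>R x"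
  have "dist (rvec (- d)) y = \<epsilon> / 2" using x \<epsilon> by (simp add: y_def dist_norm)
  then have "y \<in> C" using \<epsilon> by auto
  then have "0 \<le> x \<bullet> y" using x by (auto simp: dual_cone_def)
  then have "\<epsilon> / 2 / norm x * (x \<bullet> x) \<le> x \<bullet> rvec (- d)"
    by (simp add: y_def inner_diff_right)
  moreover have "\<epsilon> / 2 / norm x * (x \<bullet> x) > 0" using x \<epsilon> by simp
  ultimately have pos: "x \<bullet> rvec (- d) > 0" by linarith
  obtain J :: nat where J: "(x \<bullet> rvec a) / (x \<bullet> rvec (- d)) < real J" using reals_Archimedean2 by blast
  have "a + int j *s d \<notin> S" if "J \<le> j" for j
  proof
    assume "a + int j *s d \<in> S"
    then have "0 \<le> x \<bullet> rvec (a + int j *s d)" using x by (auto simp: semigrp_def dual_cone_def)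
    also have "x \<bullet> rvec (a + int j *s d) = x \<bullet> rvec a - real j * (x \<bullet> rvec (- d))"
      by (simp add: rvec_add rvec_smult rvec_uminus inner_add_right)
    finally have "real j * (x \<bullet> rvec (- d)) \<le> x \<bullet> rvec a" by simp
    moreover have "x \<bullet> rvec a < real J * (x \<bullet> rvec (- d))" using J pos by (simp add: divide_less_eq)
    moreover have "real J * (x \<bullet> rvec (- d)) \<le> real j * (x \<bullet> rvec (- d))"
      using that pos by (simp add: mult_right_mono)
    ultimately show False by linarith
  qed
  then show ?thesis by blast
qed

end

lemma primitive_nonzero: "primitive h \<Longrightarrow> h \<noteq> 0"
proof
  assume "primitive h" "h = 0"
  then have "(2::int) dvd 1" unfolding primitive_def by auto
  then show False by simp
qed

lemma primitive_Gcd: "primitive h \<Longrightarrow> Gcd (range (\<lambda>i. h $ i)) = 1"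
proof -
  assume p: "primitive h"
  have "\<forall>i. Gcd (range (\<lambda>i. h $ i)) dvd h $ i" by (auto intro: Gcd_dvd)
  then have "Gcd (range (\<lambda>i. h $ i)) dvd 1" using p unfolding primitive_def by blast
  then have "\<bar>Gcd (range (\<lambda>i. h $ i))\<bar> = 1" by (simp only: zdvd1_eq)
  moreover have "Gcd (range (\<lambda>i. h $ i)) \<ge> 0" by (rule Gcd_int_greater_eq_0)
  ultimately show ?thesis by linarith
qed

lemma primitive_normalize:
  fixes g :: "int ^ 'n"
  assumes "g \<noteq> 0"
  shows "\<exists>h k. primitive h \<and> k > 0 \<and> g = k *s h"
proof -
  define k where "k = Gcd (range (\<lambda>i. g $ i))"
  have k0: "k \<noteq> 0" using assms by (auto simp: k_def vec_eq_iff)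
  have kpos: "k > 0" using k0 Gcd_int_greater_eq_0 k_def by (metis order_le_less)
  have kd: "k dvd g $ i" for i unfolding k_def by (rule Gcd_dvd) auto
  define h where "h = (\<chi> i. g $ i div k)"
  have g: "g = k *s h" using kd by (simp add: h_def vec_eq_iff)
  have "primitive h" unfolding primitive_def
  proof (intro allI impI)
    fix m :: int assume m: "\<forall>i. m dvd h $ i"
    have mk: "m * k dvd g $ i" for i using m[rule_format, of i] by (simp add: g)
    have "m * k dvd Gcd (range (\<lambda>i. g $ i))" by (rule Gcd_greatest) (use mk in auto)
    then have "m * k dvd k" by (simp add: k_def)
    then have "m * k dvd 1 * k" by simp
    then show "m dvd 1" using k0 dvd_mult_cancel_right[of m k 1] by blast
  qed
  then show ?thesis using kpos g by blast
qed

lemma rvec_neg_nz: "g \<noteq> 0 \<Longrightarrow> - rvec g \<noteq> 0"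
proof
  assume g: "g \<noteq> 0" and "- rvec g = 0"
  then have "rvec g = rvec 0" by (simp add: rvec_zero)
  then have "g = 0" by (rule rvec_inj)
  with g show False by simp
qed

context mt begin

lemma C_gens: obtains G :: "(int ^ 'n) set" where "finite G" "0 \<notin> G" "C = {y. \<forall>g\<in>G. 0 \<le> rvec g \<bullet> y}"
proof -
  obtain G where G: "finite G" "\<sigma> = {\<Sum>g\<in>G. c g *\<^sub>R rvec g | c. \<forall>g\<in>G. 0 \<le> c g}"
    using cone by (auto simp: rational_polyhedral_cone_def)
  have "C = {y. \<forall>g\<in>G. 0 \<le> rvec g \<bullet> y}"
  proof (intro set_eqI iffI)
    fix y assume y: "y \<in> C"
    show "y \<in> {y. \<forall>g\<in>G. 0 \<le> rvec g \<bullet> y}"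
    proof (intro CollectI ballI)
      fix g assume g: "g \<in> G"
      have "(\<Sum>g'\<in>G. (if g' = g then 1 else 0) *\<^sub>R rvec g') = (\<Sum>g'\<in>G. if g' = g then rvec g' else 0)"
        by (rule sum.cong) auto
      also have "\<dots> = rvec g" using sum.delta[OF G(1), of g rvec] g by simp
      finally have sumeq: "(\<Sum>g'\<in>G. (if g' = g then 1 else 0) *\<^sub>R rvec g') = rvec g" .
      have "\<exists>c. rvec g = (\<Sum>g'\<in>G. c g' *\<^sub>R rvec g') \<and> (\<forall>g'\<in>G. 0 \<le> c g')"
        by (rule exI[of _ "\<lambda>g'. if g' = g then 1 else 0"]) (use sumeq in auto)
      then have "rvec g \<in> \<sigma>" by (subst G(2)) blast
      then show "0 \<le> rvec g \<bullet> y" using y by (auto simp: dual_cone_def)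
    qed
  next
    fix y assume y: "y \<in> {y. \<forall>g\<in>G. 0 \<le> rvec g \<bullet> y}"
    show "y \<in> C" unfolding dual_cone_def
    proof (intro CollectI ballI)
      fix x assume "x \<in> \<sigma>"
      then obtain c where c: "\<forall>g\<in>G. 0 \<le> c g" "x = (\<Sum>g\<in>G. c g *\<^sub>R rvec g)" using G(2) by auto
      have "x \<bullet> y = (\<Sum>g\<in>G. c g * (rvec g \<bullet> y))" by (simp add: c(2) inner_sum_left)
      also have "\<dots> \<ge> 0" using c(1) y by (auto intro!: sum_nonneg)
      finally show "0 \<le> x \<bullet> y" .
    qed
  qed
  then have "C = {y. \<forall>g\<in>G - {0}. 0 \<le> rvec g \<bullet> y}" by (auto simp: rvec_zero)
  then show ?thesis using that G(1) by blast
qed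

lemma C_polyhedron: "polyhedron C"
proof -
  obtain G where G: "finite G" "0 \<notin> G" "C = {y. \<forall>g\<in>G. 0 \<le> rvec g \<bullet> y}" by (rule C_gens)
  have eq: "C = \<Inter> ((\<lambda>g. {x. (- rvec g) \<bullet> x \<le> 0}) ` G)" using G(3) by auto
  have nz: "- rvec g \<noteq> 0" if "g \<in> G" for g
  proof (rule rvec_neg_nz)
    show "g \<noteq> 0" using that G(2) by metis
  qed
  have hs: "\<forall>h\<in>(\<lambda>g. {x. (- rvec g) \<bullet> x \<le> 0}) ` G. \<exists>a b. a \<noteq> 0 \<and> h = {x. a \<bullet> x \<le> b}"
  proof
    fix h assume "h \<in> (\<lambda>g. {x. (- rvec g) \<bullet> x \<le> 0}) ` G"
    then obtain g where "g \<in> G" "h = {x. (- rvec g) \<bullet> x \<le> 0}" by blast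
    then show "\<exists>a b. a \<noteq> 0 \<and> h = {x. a \<bullet> x \<le> b}" using nz by blast
  qed
  show ?thesis unfolding polyhedron_def
    by (rule exI[of _ "(\<lambda>g. {x. (- rvec g) \<bullet> x \<le> 0}) ` G"]) (use G(1) eq hs in simp)
qed

lemma C_interior: "interior C \<noteq> {}" using dint by auto
lemma C_aff_hull: "affine hull C = UNIV" using C_interior by (rule affine_hull_nonempty_interior)
lemma C_aff_dim: "aff_dim C = int CARD('n)" using aff_dim_nonempty_interior[OF C_interior] by simp

lemma violated_facet:
  assumes y: "y \<notin> C"
  shows "\<exists>g::int^'n. g \<noteq> 0 \<and> rvec g \<bullet> y < 0 \<and> (\<forall>z\<in>C. 0 \<le> rvec g \<bullet> z)
           \<and> {z\<in>C. rvec g \<bullet> z = 0} facet_of C"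
proof -
  obtain G where G: "finite G" "0 \<notin> G" "C = {y. \<forall>g\<in>G. 0 \<le> rvec g \<bullet> y}" by (rule C_gens)
  define P where "P G' \<longleftrightarrow> G' \<subseteq> G \<and> C = {y. \<forall>g\<in>G'. 0 \<le> rvec g \<bullet> y}" for G'
  have "P G" using G by (simp add: P_def)
  then obtain G' where G': "P G'" "\<And>G''. P G'' \<Longrightarrow> card G' \<le> card G''"
    using ex_has_least_nat[of P G card] by blast
  have fG': "finite G'" using G' G(1) by (auto simp: P_def intro: finite_subset)
  have min: "C \<noteq> {y. \<forall>g\<in>G''. 0 \<le> rvec g \<bullet> y}" if "G'' \<subset> G'" for G''
  proof
    assume "C = {y. \<forall>g\<in>G''. 0 \<le> rvec g \<bullet> y}"
    then have "P G''" using that G'(1) by (auto simp: P_def)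
    then have "card G' \<le> card G''" by (rule G'(2))
    moreover have "card G'' < card G'" using psubset_card_mono[OF fG' that] .
    ultimately show False by simp
  qed
  have g0: "g \<noteq> 0" if "g \<in> G'" for g using that G'(1) G(2) by (auto simp: P_def)
  define H where "H g = {x. (- rvec g) \<bullet> x \<le> 0}" for g :: "int^'n"
  define F where "F = H ` G'"
  define ch where "ch h = (SOME g. g \<in> G' \<and> H g = h)" for h
  have ch: "ch h \<in> G' \<and> H (ch h) = h" if "h \<in> F" for h
  proof -
    have "\<exists>g. g \<in> G' \<and> H g = h" using that by (auto simp: F_def)
    then show ?thesis unfolding ch_def by (rule someI_ex)
  qed
  define a where "a h = - rvec (ch h)" for h
  define b where "b h = (0::real)" for h :: "(real^'n) set"
  have CF: "C = \<Inter> F" using G'(1) by (auto simp: P_def F_def H_def)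
  have fF: "finite F" using fG' by (simp add: F_def)
  have seq: "C = affine hull C \<inter> \<Inter> F" using CF C_aff_hull by simp
  have faceq: "a h \<noteq> 0 \<and> h = {x. a h \<bullet> x \<le> b h}" if "h \<in> F" for h
  proof -
    have "ch h \<noteq> 0" using ch[OF that] g0 by blast
    then have "a h \<noteq> 0" unfolding a_def by (rule rvec_neg_nz)
    moreover have "h = {x. a h \<bullet> x \<le> b h}" using ch[OF that] by (auto simp: a_def b_def H_def)
    ultimately show ?thesis by blast
  qed
  have psub: "C \<subset> affine hull C \<inter> \<Inter> F'" if "F' \<subset> F" for F'
  proof -
    define G'' where "G'' = {g\<in>G'. H g \<in> F'}"
    have FG: "F' = H ` G''" using that by (auto simp: G''_def F_def)
    have "G'' \<subset> G'"
    proof -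
      have "G'' \<subseteq> G'" by (auto simp: G''_def)
      moreover have "G'' \<noteq> G'" using FG that by (auto simp: F_def)
      ultimately show ?thesis by blast
    qed
    then have "C \<noteq> {y. \<forall>g\<in>G''. 0 \<le> rvec g \<bullet> y}" by (rule min)
    moreover have "\<Inter> F' = {y. \<forall>g\<in>G''. 0 \<le> rvec g \<bullet> y}" by (auto simp: FG H_def)
    moreover have "C \<subseteq> \<Inter> F'" using CF that by auto
    ultimately show ?thesis using C_aff_hull by auto
  qed
  from y CF obtain h where h: "h \<in> F" "y \<notin> h" by auto
  have facet: "C \<inter> {x. a h \<bullet> x = b h} facet_of C"
    using facet_of_polyhedron_explicit[OF fF seq faceq psub] h(1) by blast
  define g where "g = ch h"
  have g_nz: "g \<noteq> 0" using ch[OF h(1)] g0 by (simp add: g_def)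
  have hg: "h = H g" using ch[OF h(1)] by (simp add: g_def)
  have "y \<notin> H g" using h(2) hg by simp
  then have gy: "rvec g \<bullet> y < 0" by (simp add: H_def)
  have gC: "\<forall>z\<in>C. 0 \<le> rvec g \<bullet> z"
  proof
    fix z assume "z \<in> C"
    then have "z \<in> H g" using CF h(1) hg by blast
    then show "0 \<le> rvec g \<bullet> z" by (simp add: H_def)
  qed
  have eqf: "{z\<in>C. rvec g \<bullet> z = 0} = C \<inter> {x. a h \<bullet> x = b h}"
  proof -
    have "a h = - rvec g" by (simp add: a_def g_def)
    then show ?thesis by (simp add: b_def Collect_conj_eq Int_commute)
  qed
  have gf: "{z\<in>C. rvec g \<bullet> z = 0} facet_of C" unfolding eqf by (rule facet)
  have "g \<noteq> 0 \<and> rvec g \<bullet> y < 0 \<and> (\<forall>z\<in>C. 0 \<le> rvec g \<bullet> z) \<and> {z\<in>C. rvec g \<bullet> z = 0} facet_of C"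
    using g_nz gy gC gf by (intro conjI)
  then show ?thesis by (rule exI)
qed

lemma violated_fsf:
  assumes y: "y \<notin> C"
  shows "\<exists>h\<in>facet_support_functions C. rvec h \<bullet> y < 0"
proof -
  obtain g :: "int^'n" where g: "g \<noteq> 0" "rvec g \<bullet> y < 0" "\<forall>z\<in>C. 0 \<le> rvec g \<bullet> z"
       "{z\<in>C. rvec g \<bullet> z = 0} facet_of C"
    using violated_facet[OF y] by blast
  obtain h k where hk: "primitive h" "k > 0" "g = k *s h" using primitive_normalize[OF g(1)] by blast
  have rg: "rvec g \<bullet> z = real_of_int k * (rvec h \<bullet> z)" for z by (simp add: hk(3) rvec_smult)
  have hin: "h \<in> facet_support_functions C"
    unfolding facet_support_functions_def
  proof (intro CollectI conjI)
    show "primitive h" by fact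
    show "\<forall>z\<in>C. 0 \<le> rvec h \<bullet> z" using g(3) hk(2) rg by (simp add: zero_le_mult_iff)
    have "{z\<in>C. rvec h \<bullet> z = 0} = {z\<in>C. rvec g \<bullet> z = 0}" using rg hk(2) by auto
    then show "{z\<in>C. rvec h \<bullet> z = 0} facet_of C" using g(4) by simp
  qed
  have hy: "rvec h \<bullet> y < 0" using g(2) rg hk(2) by (simp add: mult_less_0_iff)
  show ?thesis using hin hy by (rule bexI[rotated])
qed

end

lemma rvec_nth: "rvec a $ i = real_of_int (a $ i)" by (simp add: rvec_def)

context mt begin

abbreviation "FS \<equiv> facet_support_functions C"

lemma hyper_span:
  assumes h: "h \<in> FS"
  shows "span {z\<in>C. rvec h \<bullet> z = 0} = {x. rvec h \<bullet> x = 0}"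
proof -
  let ?F = "{z\<in>C. rvec h \<bullet> z = 0}"
  have fac: "?F facet_of C" and pr: "primitive h" using h by (auto simp: facet_support_functions_def)
  have affF: "aff_dim ?F = int CARD('n) - 1" using fac C_aff_dim by (simp add: facet_of_def)
  have "0 \<in> ?F" using dual_zero by simp
  then have "0 \<in> affine hull ?F" by (rule hull_inc)
  from aff_dim_eq_dim[OF this] have "aff_dim ?F = int (dim ?F)" by simp
  then have dF: "dim (span ?F) = CARD('n) - 1" using affF by simp
  have hnz: "rvec h \<noteq> 0" using primitive_nonzero[OF pr] rvec_inj rvec_zero by metis
  have dP: "dim {x. rvec h \<bullet> x = 0} = CARD('n) - 1" using dim_hyperplane[OF hnz] by simp
  have sub: "span ?F \<subseteq> {x. rvec h \<bullet> x = 0}"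
    by (rule span_minimal) (auto intro: subspace_hyperplane)
  show ?thesis
    by (rule subspace_dim_equal) (use sub dF dP subspace_hyperplane in auto)
qed

lemma fsf_inj:
  assumes h1: "h1 \<in> FS" and h2: "h2 \<in> FS"
    and eq: "{z\<in>C. rvec h1 \<bullet> z = 0} = {z\<in>C. rvec h2 \<bullet> z = 0}"
  shows "h1 = h2"
proof -
  have P: "{x. rvec h1 \<bullet> x = 0} = {x. rvec h2 \<bullet> x = 0}"
    using hyper_span[OF h1] hyper_span[OF h2] eq by simp
  have cross: "h2 $ i * h1 $ j = h2 $ j * h1 $ i" for i j
  proof -
    define v where "v = real_of_int (h1 $ j) *\<^sub>R axis i (1::real) - real_of_int (h1 $ i) *\<^sub>R axis j 1"
    have "rvec h1 \<bullet> v = 0" by (simp add: v_def inner_diff_right inner_axis rvec_nth)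
    then have "rvec h2 \<bullet> v = 0" using P by blast
    then have "real_of_int (h2 $ i * h1 $ j) = real_of_int (h2 $ j * h1 $ i)"
      by (simp add: v_def inner_diff_right inner_axis rvec_nth algebra_simps)
    then show ?thesis by (simp only: of_int_eq_iff)
  qed
  have p1: "primitive h1" and p2: "primitive h2" using h1 h2 by (auto simp: facet_support_functions_def)
  obtain i where i: "h1 $ i \<noteq> 0" using primitive_nonzero[OF p1] by (auto simp: vec_eq_iff)
  define p where "p = h1 $ i"
  define r where "r = h2 $ i"
  have rel: "p * h2 $ j = r * h1 $ j" for j using cross[of i j] by (simp add: p_def r_def mult.commute)
  have p0: "p \<noteq> 0" using i by (simp add: p_def)
  have r0: "r \<noteq> 0"
  proof
    assume "r = 0"
    then have "h2 $ j = 0" for j using rel[of j] p0 by simp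
    then have "h2 = 0" by (simp add: vec_eq_iff)
    then show False using primitive_nonzero[OF p2] by simp
  qed
  have vrel: "real_of_int p * (rvec h2 \<bullet> y) = real_of_int r * (rvec h1 \<bullet> y)" for y
  proof -
    have "real_of_int p *\<^sub>R rvec h2 = real_of_int r *\<^sub>R rvec h1"
      using rel by (simp add: vec_eq_iff rvec_nth) (metis of_int_mult)
    then have "(real_of_int p *\<^sub>R rvec h2) \<bullet> y = (real_of_int r *\<^sub>R rvec h1) \<bullet> y" by simp
    then show ?thesis by simp
  qed
  have pos1: "\<forall>y\<in>C. 0 \<le> rvec h1 \<bullet> y" and pos2: "\<forall>y\<in>C. 0 \<le> rvec h2 \<bullet> y"
    using h1 h2 by (auto simp: facet_support_functions_def)
  have fac1: "{z\<in>C. rvec h1 \<bullet> z = 0} facet_of C" using h1 by (auto simp: facet_support_functions_def)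
  have pr: "p * r > 0"
  proof (rule ccontr)
    assume "\<not> p * r > 0"
    then have neg: "p * r < 0" using p0 r0 by (simp add: zero_less_mult_iff) (metis linorder_neqE_linordered_idom mult_neg_neg mult_pos_pos mult_less_0_iff)
    have "rvec h1 \<bullet> y = 0" if y: "y \<in> C" for y
    proof -
      have a: "0 \<le> rvec h1 \<bullet> y" "0 \<le> rvec h2 \<bullet> y" using pos1 pos2 y by auto
      have "real_of_int p * real_of_int p * (rvec h2 \<bullet> y) = real_of_int (p * r) * (rvec h1 \<bullet> y)"
        using vrel[of y] by (simp add: algebra_simps)
      moreover have "real_of_int p * real_of_int p * (rvec h2 \<bullet> y) \<ge> 0" using a by simp
      moreover have "real_of_int (p * r) < real_of_int 0" by (subst of_int_less_iff) (rule neg)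
      then have "real_of_int (p * r) < 0" by (simp only: of_int_0)
      ultimately show ?thesis using a(1) by (smt (verit) mult_neg_pos)
    qed
    then have "{z\<in>C. rvec h1 \<bullet> z = 0} = C" by auto
    then show False using fac1 by simp
  qed
  have "Gcd (range (\<lambda>j. p * h2 $ j)) = Gcd (range (\<lambda>j. r * h1 $ j))" using rel by simp
  moreover have "Gcd (range (\<lambda>j. p * h2 $ j)) = \<bar>p\<bar>"
  proof -
    have "range (\<lambda>j. p * h2 $ j) = (*) p ` range (\<lambda>j. h2 $ j)" by auto
    then show ?thesis using Gcd_mult[of p "range (\<lambda>j. h2 $ j)"] primitive_Gcd[OF p2] by simp
  qed
  moreover have "Gcd (range (\<lambda>j. r * h1 $ j)) = \<bar>r\<bar>"
  proof -
    have "range (\<lambda>j. r * h1 $ j) = (*) r ` range (\<lambda>j. h1 $ j)" by auto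
    then show ?thesis using Gcd_mult[of r "range (\<lambda>j. h1 $ j)"] primitive_Gcd[OF p1] by simp
  qed
  ultimately have "\<bar>p\<bar> = \<bar>r\<bar>" by simp
  then have "p = r" using pr by (smt (verit) mult_nonneg_nonpos mult_nonpos_nonneg)
  then show "h1 = h2" using rel p0 by (simp add: vec_eq_iff)
qed

lemma FS_finite: "finite FS"
proof -
  have "inj_on (\<lambda>h. {z\<in>C. rvec h \<bullet> z = 0}) FS" by (rule inj_onI) (rule fsf_inj)
  moreover have "(\<lambda>h. {z\<in>C. rvec h \<bullet> z = 0}) ` FS \<subseteq> {F. F facet_of C}"
    by (auto simp: facet_support_functions_def)
  moreover have "finite {F. F facet_of C}" by (rule finite_polyhedron_facets[OF C_polyhedron])
  ultimately show ?thesis by (meson finite_imageD finite_subset)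
qed

lemma G1:
  assumes a: "a \<in> S" and ad: "a + d \<notin> S"
  shows "f (cvec a) = 0"
proof -
  have "rvec (a + d) \<notin> C" using ad by (simp add: semigrp_def)
  then obtain h where h: "h \<in> FS" "rvec h \<bullet> rvec (a + d) < 0" using violated_fsf by blast
  have "0 \<le> rvec h \<bullet> rvec a" using h(1) a by (auto simp: facet_support_functions_def semigrp_def)
  then have m0: "0 \<le> lin_int h a" by (simp add: rvec_inner)
  have "lin_int h a + lin_int h d < 0" using h(2) by (simp add: rvec_inner lin_int_add)
  then have mn: "lin_int h a \<le> lin_int h (- d) - 1" by (simp add: lin_int_uminus)
  have "ffact (lin_cplx h (cvec a)) (lin_int h (- d) - 1) = 0"
  proof -
    have "lin_int h a \<in> {0..lin_int h (- d) - 1}" using m0 mn by simp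
    moreover have "\<not> lin_int h (- d) - 1 < 0" using m0 mn by simp
    ultimately show ?thesis unfolding ffact_def lin_cplx_cvec
      by (auto intro!: prod_zero)
  qed
  then have "Hpoly \<sigma> d (cvec a) = 0" unfolding Hpoly_def
    using FS_finite h(1) by (auto intro!: prod_zero)
  moreover obtain Q where "\<forall>x. f x = Hpoly \<sigma> d x * Q x" using fdiv by (auto simp: poly_dvd_def)
  ultimately show ?thesis by simp
qed

end

lemma prim_real:
  fixes e :: "int ^ 'n" and x :: real
  assumes p: "primitive e" and z: "\<forall>i. \<exists>z::int. x * real_of_int (e $ i) = real_of_int z"
  shows "\<exists>k::int. x = real_of_int k"
proof -
  obtain i where i: "e $ i \<noteq> 0" using primitive_nonzero[OF p] by (auto simp: vec_eq_iff)
  obtain n where n: "x * real_of_int (e $ i) = real_of_int n" using z by blast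
  define m where "m = e $ i"
  define g where "g = gcd n m"
  have m0: "m \<noteq> 0" using i by (simp add: m_def)
  have g0: "g \<noteq> 0" using m0 by (simp add: g_def)
  define n' where "n' = n div g"
  define m' where "m' = m div g"
  have cop: "coprime n' m'" unfolding n'_def m'_def g_def using m0 by (intro div_gcd_coprime) simp
  have nn: "n = g * n'" unfolding n'_def g_def by simp
  have mm: "m = g * m'" unfolding m'_def g_def by simp
  have m'0: "m' \<noteq> 0" using m0 mm by auto
  have xe: "x * real_of_int m' = real_of_int n'"
  proof -
    have "real_of_int g * (x * real_of_int m') = real_of_int g * real_of_int n'"
      using n by (simp add: m_def[symmetric] nn mm algebra_simps)
    then show ?thesis using g0 by simp
  qed
  have "m' dvd e $ j" for j
  proof -
    obtain zj where zj: "x * real_of_int (e $ j) = real_of_int zj" using z by blast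
    have "real_of_int (m' * zj) = real_of_int (n' * e $ j)"
    proof -
      have "real_of_int (m' * zj) = real_of_int m' * (x * real_of_int (e $ j))" using zj by simp
      also have "\<dots> = real_of_int n' * real_of_int (e $ j)" using xe by (simp add: algebra_simps)
      finally show ?thesis by simp
    qed
    then have "m' * zj = n' * e $ j" by (simp only: of_int_eq_iff)
    then have "m' dvd n' * e $ j" by (metis dvd_triv_left)
    moreover have "coprime m' n'" using cop by (simp add: coprime_commute)
    ultimately show ?thesis using coprime_dvd_mult_right_iff by blast
  qed
  then have "m' dvd 1" using p unfolding primitive_def by blast
  then have "\<bar>m'\<bar> = 1" by simp
  then have "m' = 1 \<or> m' = -1" by linarith
  then show ?thesis using xe by (metis mult.right_neutral mult_minus1_right of_int_minus minus_minus of_int_1 mult_minus_right)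
qed

context mt begin

definition zs :: "int ^ 'n \<Rightarrow> int set" where "zs a = {k. a + k *s e \<in> Vmon f}"
definition fin :: "int ^ 'n \<Rightarrow> bool" where "fin a \<longleftrightarrow> zs a \<noteq> {} \<and> bdd_below (zs a)"
definition lo :: "int ^ 'n \<Rightarrow> int" where "lo a = Inf (zs a)"
definition tp :: "int ^ 'n \<Rightarrow> int" where "tp a = Max {k\<in>zs a. lo a \<le> k \<and> k < lo a + q}"

lemma lo_prop: assumes "fin a" shows "lo a \<in> zs a" "\<And>k. k \<in> zs a \<Longrightarrow> lo a \<le> k"
proof -
  obtain k0 where k0: "k0 \<in> zs a" "\<forall>k\<in>zs a. k0 \<le> k" using int_min_exists assms by (auto simp: fin_def)
  have "lo a = k0" unfolding lo_def using k0 by (intro cInf_eq_minimum) auto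
  then show "lo a \<in> zs a" "\<And>k. k \<in> zs a \<Longrightarrow> lo a \<le> k" using k0 by auto
qed

lemma tp_prop: assumes "fin a"
  shows "tp a \<in> zs a" "lo a \<le> tp a" "tp a < lo a + q" "\<And>k. k \<in> zs a \<Longrightarrow> k < lo a + q \<Longrightarrow> k \<le> tp a"
proof -
  let ?A = "{k\<in>zs a. lo a \<le> k \<and> k < lo a + q}"
  have fA: "finite ?A" by (rule finite_subset[of _ "{lo a..<lo a + q}"]) auto
  have "lo a \<in> ?A" using lo_prop[OF assms] q by auto
  then have ne: "?A \<noteq> {}" by blast
  have "tp a \<in> ?A" unfolding tp_def using fA ne by (rule Max_in)
  then show "tp a \<in> zs a" "lo a \<le> tp a" "tp a < lo a + q" by auto
  show "k \<le> tp a" if "k \<in> zs a" "k < lo a + q" for k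
    unfolding tp_def using fA that lo_prop[OF assms] by (intro Max_ge) auto
qed

lemma tp_unique:
  assumes "fin a" "k \<in> zs a" "lo a \<le> k" "k < lo a + q" "\<And>k'. k' \<in> zs a \<Longrightarrow> k' < lo a + q \<Longrightarrow> k' \<le> k"
  shows "tp a = k"
  using tp_prop[OF assms(1)] assms by (meson order_antisym)

lemma shift_eq: "(a + j *s e) + k *s e = a + (k + j) *s e"
  by (simp add: vec_eq_iff algebra_simps)

lemma zs_shift: "k \<in> zs (a + j *s e) \<longleftrightarrow> k + j \<in> zs a"
  by (simp add: zs_def shift_eq)

lemma zs_shift_img: "zs (a + j *s e) = (\<lambda>k. k - j) ` zs a"
proof (intro set_eqI iffI)
  fix k assume "k \<in> zs (a + j *s e)"
  then have "k + j \<in> zs a" by (simp add: zs_shift)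
  then show "k \<in> (\<lambda>k. k - j) ` zs a" by (intro image_eqI[of _ _ "k + j"]) auto
next
  fix k assume "k \<in> (\<lambda>k. k - j) ` zs a"
  then show "k \<in> zs (a + j *s e)" by (auto simp: zs_shift)
qed

lemma fin_shift: "fin (a + j *s e) \<longleftrightarrow> fin a"
proof -
  have "bdd_below ((\<lambda>k. k - j) ` zs a) \<longleftrightarrow> bdd_below (zs a)"
  proof
    assume "bdd_below ((\<lambda>k. k - j) ` zs a)"
    then obtain b where "\<forall>x\<in>zs a. b \<le> x - j" by (auto simp: bdd_below_def)
    then show "bdd_below (zs a)" by (intro bdd_belowI[of _ "b + j"]) auto
  next
    assume "bdd_below (zs a)"
    then obtain b where "\<forall>x\<in>zs a. b \<le> x" by (auto simp: bdd_below_def)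
    then show "bdd_below ((\<lambda>k. k - j) ` zs a)" by (intro bdd_belowI[of _ "b - j"]) auto
  qed
  then show ?thesis by (simp add: fin_def zs_shift_img)
qed

lemma lo_shift: assumes "fin a" shows "lo (a + j *s e) = lo a - j"
proof -
  have "Inf (zs (a + j *s e)) = lo a - j"
  proof (rule cInf_eq_minimum)
    show "lo a - j \<in> zs (a + j *s e)" using lo_prop(1)[OF assms] by (simp add: zs_shift)
    fix x assume "x \<in> zs (a + j *s e)"
    then have "x + j \<in> zs a" by (simp add: zs_shift)
    then show "lo a - j \<le> x" using lo_prop(2)[OF assms] by fastforce
  qed
  then show ?thesis by (simp add: lo_def)
qed

lemma tp_shift: assumes "fin a" shows "tp (a + j *s e) = tp a - j"
proof -
  have f2: "fin (a + j *s e)" using assms by (simp add: fin_shift)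
  show ?thesis
  proof (rule tp_unique[OF f2])
    show "tp a - j \<in> zs (a + j *s e)" using tp_prop(1)[OF assms] by (simp add: zs_shift)
    show "lo (a + j *s e) \<le> tp a - j" using tp_prop(2)[OF assms] lo_shift[OF assms] by simp
    show "tp a - j < lo (a + j *s e) + q" using tp_prop(3)[OF assms] lo_shift[OF assms] by simp
    fix k' assume "k' \<in> zs (a + j *s e)" "k' < lo (a + j *s e) + q"
    then have "k' + j \<in> zs a" "k' + j < lo a + q" using lo_shift[OF assms] by (auto simp: zs_shift)
    then show "k' \<le> tp a - j" using tp_prop(4)[OF assms] by fastforce
  qed
qed

lemma d_eq: "j *s d = (j * q) *s e" by (simp add: de vec_eq_iff algebra_simps)

definition T :: "int ^ 'n \<Rightarrow> real set" where "T a = {t. rvec a + t *\<^sub>R rvec d \<in> rvec ` Vmon f}"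

lemma T_zs: "T a = (\<lambda>k. real_of_int k / real_of_int q) ` zs a"
proof (intro set_eqI iffI)
  fix t assume "t \<in> T a"
  then obtain b where b: "b \<in> Vmon f" "rvec a + t *\<^sub>R rvec d = rvec b" by (auto simp: T_def)
  have "\<forall>i. \<exists>z::int. (t * real_of_int q) * real_of_int (e $ i) = real_of_int z"
  proof
    fix i
    have "(rvec a + t *\<^sub>R rvec d) $ i = rvec b $ i" using b(2) by simp
    then have "(t * real_of_int q) * real_of_int (e $ i) = real_of_int (b $ i - a $ i)"
      by (simp add: rvec_d rvec_nth algebra_simps)
    then show "\<exists>z::int. (t * real_of_int q) * real_of_int (e $ i) = real_of_int z" by blast
  qed
  then obtain k where k: "t * real_of_int q = real_of_int k" using prim_real[OF e] by blast
  have tq: "t = real_of_int k / real_of_int q" using k q by (simp add: field_simps)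
  have "rvec (a + k *s e) = rvec b" using b(2) k by (simp add: rvec_add rvec_smult rvec_d algebra_simps)
  then have "a + k *s e = b" by (rule rvec_inj)
  then have "k \<in> zs a" using b(1) by (simp add: zs_def)
  then show "t \<in> (\<lambda>k. real_of_int k / real_of_int q) ` zs a" using tq by blast
next
  fix t assume "t \<in> (\<lambda>k. real_of_int k / real_of_int q) ` zs a"
  then obtain k where k: "k \<in> zs a" "t = real_of_int k / real_of_int q" by blast
  have "rvec a + t *\<^sub>R rvec d = rvec (a + k *s e)"
    using k(2) q by (simp add: rvec_add rvec_smult rvec_d)
  then show "t \<in> T a" using k(1) by (auto simp: T_def zs_def)
qed

lemma val_T: "val d f a = Inf (ereal ` T a)"
  unfolding val_def T_def by (simp add: image_def) (metis (no_types, lifting))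

lemma val_empty: "zs a = {} \<Longrightarrow> val d f a = \<infinity>"
  by (simp add: val_T T_zs top_ereal_def)

lemma val_unbdd: assumes "zs a \<noteq> {}" "\<not> bdd_below (zs a)" shows "val d f a = -\<infinity>"
proof -
  have le: "val d f a \<le> ereal B" for B
  proof -
    obtain k where k: "k \<in> zs a" "k < floor (B * real_of_int q)"
      using assms(2) unfolding bdd_below_def by (meson not_le)
    then have "real_of_int k < B * real_of_int q" by linarith
    then have "real_of_int k / real_of_int q < B" using q by (simp add: divide_less_eq)
    moreover have "val d f a \<le> ereal (real_of_int k / real_of_int q)"
      unfolding val_T T_zs using k(1) by (intro Inf_lower) auto
    ultimately show ?thesis by (meson ereal_less_eq(3) less_imp_le order.trans)
  qed
  show ?thesis
  proof (cases "val d f a")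
    case (real r) then show ?thesis using le[of "r - 1"] by simp
  next
    case PInf then show ?thesis using le[of 0] by simp
  qed simp
qed

lemma val_fin: assumes "fin a" shows "val d f a = ereal (real_of_int (lo a) / real_of_int q)"
  unfolding val_T T_zs
proof (rule Inf_eqI)
  fix i assume "i \<in> ereal ` (\<lambda>k. real_of_int k / real_of_int q) ` zs a"
  then obtain k where k: "k \<in> zs a" "i = ereal (real_of_int k / real_of_int q)" by blast
  have "lo a \<le> k" using lo_prop(2)[OF assms k(1)] .
  then show "ereal (real_of_int (lo a) / real_of_int q) \<le> i" using k(2) q by (simp add: divide_right_mono)
next
  fix y assume "\<And>i. i \<in> ereal ` (\<lambda>k. real_of_int k / real_of_int q) ` zs a \<Longrightarrow> y \<le> i"
  then show "y \<le> ereal (real_of_int (lo a) / real_of_int q)" using lo_prop(1)[OF assms] by blast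
qed

lemma val_finite_iff: "(val d f a \<noteq> \<infinity> \<and> val d f a \<noteq> -\<infinity>) \<longleftrightarrow> fin a"
  using val_empty val_unbdd val_fin fin_def by (metis MInfty_neq_ereal(1) PInfty_neq_ereal(1) ereal_infty_less(1) ereal_infty_less(2))

lemma val_gt_iff: "(val d f a > -\<infinity>) \<longleftrightarrow> (zs a = {} \<or> bdd_below (zs a))"
proof (cases "zs a = {}")
  case True then show ?thesis by (simp add: val_empty)
next
  case False
  show ?thesis
  proof (cases "bdd_below (zs a)")
    case True
    then have "fin a" using False by (simp add: fin_def)
    then show ?thesis using True by (simp add: val_fin)
  next
    case nb: False
    then show ?thesis using False val_unbdd by simp
  qed
qed

lemma pval_fin: assumes "fin a" shows "pval d f a = real_of_int (tp a) / real_of_int q"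
proof -
  let ?v = "real_of_int (lo a) / real_of_int q"
  have v: "real_of_ereal (val d f a) = ?v" using val_fin[OF assms] by simp
  have qp: "real_of_int q > 0" using q by simp
  let ?B = "{t. ?v \<le> t \<and> t < ?v + 1 \<and> rvec a + t *\<^sub>R rvec d \<in> rvec ` Vmon f}"
  have B: "?B = (\<lambda>k. real_of_int k / real_of_int q) ` {k\<in>zs a. lo a \<le> k \<and> k < lo a + q}"
  proof -
    have "?B = {t\<in>T a. ?v \<le> t \<and> t < ?v + 1}" by (auto simp: T_def)
    also have "\<dots> = (\<lambda>k. real_of_int k / real_of_int q) ` {k\<in>zs a. lo a \<le> k \<and> k < lo a + q}"
    proof -
      have "(?v \<le> real_of_int k / real_of_int q \<and> real_of_int k / real_of_int q < ?v + 1) \<longleftrightarrow> (lo a \<le> k \<and> k < lo a + q)" for k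
      proof -
        have "?v \<le> real_of_int k / real_of_int q \<longleftrightarrow> real_of_int (lo a) \<le> real_of_int k"
          using qp by (simp add: divide_le_cancel)
        moreover have "real_of_int k / real_of_int q < ?v + 1 \<longleftrightarrow> real_of_int k < real_of_int (lo a + q)"
          using qp by (simp add: field_simps)
        moreover have "real_of_int k < real_of_int (lo a + q) \<longleftrightarrow> k < lo a + q" by (simp only: of_int_less_iff)
        ultimately show ?thesis by (simp only: of_int_le_iff)
      qed
      then show ?thesis unfolding T_zs by auto
    qed
    finally show ?thesis .
  qed
  have fA: "finite {k\<in>zs a. lo a \<le> k \<and> k < lo a + q}" by (rule finite_subset[of _ "{lo a..<lo a + q}"]) auto
  have "Max ?B = real_of_int (tp a) / real_of_int q"
  proof (rule Max_eqI)
    show "finite ?B" unfolding B using fA by simp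
    show "real_of_int (tp a) / real_of_int q \<in> ?B" unfolding B using tp_prop[OF assms] by auto
    fix y assume "y \<in> ?B"
    then obtain k where k: "k \<in> zs a" "k < lo a + q" "y = real_of_int k / real_of_int q" unfolding B by auto
    have "k \<le> tp a" using tp_prop(4)[OF assms k(1,2)] .
    then show "y \<le> real_of_int (tp a) / real_of_int q" using k(3) qp by (simp add: divide_right_mono)
  qed
  then show ?thesis unfolding pval_def Let_def v .
qed

lemma Vmon'_eq: "Vmon' d f = {a + tp a *s e | a. fin a}"
proof (intro set_eqI iffI)
  fix b assume "b \<in> Vmon' d f"
  then obtain a where a: "val d f a \<noteq> \<infinity>" "val d f a \<noteq> -\<infinity>" "rvec b = rvec a + pval d f a *\<^sub>R rvec d"
    by (auto simp: Vmon'_def)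
  have fa: "fin a" using a(1,2) val_finite_iff by blast
  have "rvec b = rvec (a + tp a *s e)" using a(3) q by (simp add: pval_fin[OF fa] rvec_d rvec_add rvec_smult)
  then have "b = a + tp a *s e" by (rule rvec_inj)
  then show "b \<in> {a + tp a *s e | a. fin a}" using fa by blast
next
  fix b assume "b \<in> {a + tp a *s e | a. fin a}"
  then obtain a where a: "fin a" "b = a + tp a *s e" by blast
  have "rvec b = rvec a + pval d f a *\<^sub>R rvec d" using a q by (simp add: pval_fin rvec_d rvec_add rvec_smult)
  then show "b \<in> Vmon' d f" using a(1) val_finite_iff by (auto simp: Vmon'_def)
qed

end

definition IE :: "(int ^ 'n) set \<Rightarrow> (int ^ 'n) set \<Rightarrow> (int ^ 'n \<Rightarrow> complex) set" where
  "IE S E = {p\<in>ringR S. \<forall>c. p c \<noteq> 0 \<longrightarrow> c \<in> E}"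

definition splus :: "(int ^ 'n) set \<Rightarrow> (int ^ 'n) set \<Rightarrow> (int ^ 'n) set" where
  "splus X S = {x + s | x s. x \<in> X \<and> s \<in> S}"

lemma IE_ideal:
  assumes ES: "E \<subseteq> S" and up: "\<And>x s. x \<in> E \<Longrightarrow> s \<in> S \<Longrightarrow> x + s \<in> E"
  shows "is_ideal S (IE S E)"
  unfolding is_ideal_def
proof (intro conjI ballI)
  show "IE S E \<subseteq> ringR S" by (auto simp: IE_def)
  show "(\<lambda>c. 0) \<in> IE S E" by (simp add: IE_def ringR_def)
next
  fix p q assume p: "p \<in> IE S E" and q: "q \<in> IE S E"
  have "{a. p a + q a \<noteq> 0} \<subseteq> {a. p a \<noteq> 0} \<union> {a. q a \<noteq> 0}" by auto
  moreover have "finite ({a. p a \<noteq> 0} \<union> {a. q a \<noteq> 0})" using p q by (simp add: IE_def ringR_def)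
  ultimately have "finite {a. p a + q a \<noteq> 0}" by (rule finite_subset)
  moreover have "\<forall>c. p c + q c \<noteq> 0 \<longrightarrow> c \<in> E"
  proof (intro allI impI)
    fix c assume "p c + q c \<noteq> 0"
    then have "p c \<noteq> 0 \<or> q c \<noteq> 0" by auto
    then show "c \<in> E" using p q unfolding IE_def by blast
  qed
  ultimately show "(\<lambda>c. p c + q c) \<in> IE S E" using ES by (auto simp: IE_def ringR_def)
next
  fix r p assume r: "r \<in> ringR S" and p: "p \<in> IE S E"
  have fr: "finite {a. r a \<noteq> 0}" and fp: "finite {a. p a \<noteq> 0}" using r p by (auto simp: ringR_def IE_def)
  have key: "\<exists>a b. r a \<noteq> 0 \<and> p b \<noteq> 0 \<and> c = b + a" if "rmult r p c \<noteq> 0" for c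
  proof -
    from that obtain a where "a \<in> {a. r a \<noteq> 0}" "r a * p (c - a) \<noteq> 0"
      unfolding rmult_def by (meson sum.neutral)
    then show ?thesis by (intro exI[of _ a] exI[of _ "c - a"]) auto
  qed
  have "{c. rmult r p c \<noteq> 0} \<subseteq> (\<lambda>(a, b). b + a) ` ({a. r a \<noteq> 0} \<times> {b. p b \<noteq> 0})"
    using key by fastforce
  then have fin: "finite {c. rmult r p c \<noteq> 0}" using fr fp by (meson finite_SigmaI finite_imageI finite_subset)
  have inE: "c \<in> E" if "rmult r p c \<noteq> 0" for c
  proof -
    from key[OF that] obtain a b where "r a \<noteq> 0" "p b \<noteq> 0" "c = b + a" by blast
    then show ?thesis using r p up by (auto simp: ringR_def IE_def)
  qed
  show "rmult r p \<in> IE S E" using fin inE ES by (auto simp: IE_def ringR_def)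
qed

lemma xmono_IE: "a \<in> E \<Longrightarrow> E \<subseteq> S \<Longrightarrow> xmono a \<in> IE S E"
  by (auto simp: IE_def ringR_def xmono_def)

lemma rmult_xmono: assumes "finite {a. r a \<noteq> 0}" shows "rmult r (xmono x) = (\<lambda>y. r (y - x))"
proof
  fix y
  have "rmult r (xmono x) y = (\<Sum>a\<in>{a. r a \<noteq> 0}. if a = y - x then r a else 0)"
    unfolding rmult_def xmono_def by (rule sum.cong) auto
  also have "\<dots> = r (y - x)" using assms by (simp add: sum.delta')
  finally show "rmult r (xmono x) y = r (y - x)" .
qed

lemma IE_minimal:
  assumes J: "is_ideal S J" and gen: "\<forall>a\<in>X. xmono a \<in> J"
  shows "IE S (splus X S) \<subseteq> J"
proof
  fix p assume p: "p \<in> IE S (splus X S)"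
  let ?P = "{c. p c \<noteq> 0}"
  have fP: "finite ?P" using p by (simp add: IE_def ringR_def)
  have Jz: "(\<lambda>c. 0) \<in> J" and Jadd: "\<And>u v. u \<in> J \<Longrightarrow> v \<in> J \<Longrightarrow> (\<lambda>c. u c + v c) \<in> J"
    and Jmul: "\<And>r u. r \<in> ringR S \<Longrightarrow> u \<in> J \<Longrightarrow> rmult r u \<in> J"
    using J by (auto simp: is_ideal_def)
  have trm: "(\<lambda>y. if y = c then p c else 0) \<in> J" if c: "c \<in> ?P" for c
  proof -
    have "c \<in> splus X S" using p c by (auto simp: IE_def)
    then obtain x s where xs: "x \<in> X" "s \<in> S" "c = x + s" by (auto simp: splus_def)
    define r where "r = (\<lambda>y. if y = s then p c else (0::complex))"
    have fr: "finite {a. r a \<noteq> 0}" by (rule finite_subset[of _ "{s}"]) (auto simp: r_def)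
    have "r \<in> ringR S" using fr xs(2) by (auto simp: ringR_def r_def)
    then have "rmult r (xmono x) \<in> J" using gen xs(1) Jmul by blast
    moreover have "rmult r (xmono x) = (\<lambda>y. if y = c then p c else 0)"
      unfolding rmult_xmono[OF fr] by (auto simp: r_def xs(3) algebra_simps)
    ultimately show ?thesis by simp
  qed
  have "A \<subseteq> ?P \<Longrightarrow> (\<lambda>y. \<Sum>c\<in>A. if y = c then p c else 0) \<in> J" if "finite A" for A
    using that
  proof (induction A rule: finite_induct)
    case empty then show ?case using Jz by simp
  next
    case (insert c A)
    have "(\<lambda>y. \<Sum>c'\<in>insert c A. if y = c' then p c' else 0)
        = (\<lambda>y. (if y = c then p c else 0) + (\<Sum>c'\<in>A. if y = c' then p c' else 0))"
      using insert(1,2) by (intro ext) (rule sum.insert)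
    moreover have "(\<lambda>y. (if y = c then p c else 0) + (\<Sum>c'\<in>A. if y = c' then p c' else 0)) \<in> J"
      using insert trm by (intro Jadd) auto
    ultimately show ?case by simp
  qed
  from this[OF fP] have "(\<lambda>y. \<Sum>c\<in>?P. if y = c then p c else 0) \<in> J" by simp
  moreover have "(\<lambda>y. \<Sum>c\<in>?P. if y = c then p c else 0) = p"
  proof
    fix y show "(\<Sum>c\<in>?P. if y = c then p c else 0) = p y"
      using fP by (simp add: sum.delta)
  qed
  ultimately show "p \<in> J" by simp
qed

lemma mono_gen_IE:
  assumes S0: "0 \<in> S" and Sadd: "\<And>a b. a \<in> S \<Longrightarrow> b \<in> S \<Longrightarrow> a + b \<in> S" and X: "X \<subseteq> S"
  shows "mono_gen_ideal S X = IE S (splus X S)"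
proof -
  have ES: "splus X S \<subseteq> S" using X Sadd by (auto simp: splus_def)
  have up: "x + s \<in> splus X S" if "x \<in> splus X S" "s \<in> S" for x s
  proof -
    from that(1) obtain y t where "y \<in> X" "t \<in> S" "x = y + t" unfolding splus_def by blast
    then show ?thesis using that(2) Sadd unfolding splus_def by (intro CollectI exI[of _ y] exI[of _ "t + s"]) (simp add: add.assoc)
  qed
  have id: "is_ideal S (IE S (splus X S))" by (rule IE_ideal[OF ES up])
  have gen: "\<forall>a\<in>X. xmono a \<in> IE S (splus X S)"
  proof
    fix a assume "a \<in> X"
    then have "a \<in> splus X S" using S0 unfolding splus_def by (intro CollectI exI[of _ a] exI[of _ 0]) simp
    then show "xmono a \<in> IE S (splus X S)" using ES by (rule xmono_IE)
  qed
  show ?thesis unfolding mono_gen_ideal_def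
  proof (rule antisym)
    show "\<Inter> {J. is_ideal S J \<and> (\<forall>a\<in>X. xmono a \<in> J)} \<subseteq> IE S (splus X S)"
      using id gen by (intro Inter_lower) simp
    show "IE S (splus X S) \<subseteq> \<Inter> {J. is_ideal S J \<and> (\<forall>a\<in>X. xmono a \<in> J)}"
      using IE_minimal by (intro Inter_greatest) blast
  qed
qed

lemma Exp_IE: "E \<subseteq> S \<Longrightarrow> Exp S (IE S E) = E"
proof (intro set_eqI iffI)
  fix a assume "a \<in> Exp S (IE S E)"
  then have "xmono a \<in> IE S E" by (simp add: Exp_def)
  then show "a \<in> E" by (auto simp: IE_def xmono_def)
next
  fix a assume "a \<in> E" "E \<subseteq> S"
  then show "a \<in> Exp S (IE S E)" by (auto simp: Exp_def intro: xmono_IE)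
qed

lemma IE_nonzero: "E \<noteq> {} \<Longrightarrow> E \<subseteq> S \<Longrightarrow> IE S E \<noteq> {\<lambda>c. 0}"
proof
  assume "E \<noteq> {}" "E \<subseteq> S" "IE S E = {\<lambda>c. 0}"
  then obtain a where "a \<in> E" "xmono a \<in> IE S E" using xmono_IE by blast
  then have "xmono a = (\<lambda>c. 0)" using \<open>IE S E = {\<lambda>c. 0}\<close> by simp
  then have "xmono a a = 0" by simp
  then show False by (simp add: xmono_def)
qed

lemma IE_empty: "IE S {} = {\<lambda>c. 0}"
  by (auto simp: IE_def ringR_def)

lemma delta_fix_D:
  assumes fx: "delta_op d f ` IE S E = IE S E" and ES: "E \<subseteq> S"
  shows "\<And>a. a \<in> E \<Longrightarrow> f (cvec a) \<noteq> 0 \<Longrightarrow> a + d \<in> E"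
    and "\<And>b. b \<in> E \<Longrightarrow> b - d \<in> E \<and> f (cvec (b - d)) \<noteq> 0"
proof -
  fix a assume a: "a \<in> E" "f (cvec a) \<noteq> 0"
  have "delta_op d f (xmono a) \<in> IE S E" using fx xmono_IE[OF a(1) ES] by blast
  moreover have "delta_op d f (xmono a) (a + d) \<noteq> 0" using a(2) by (simp add: delta_op_def xmono_def)
  ultimately show "a + d \<in> E" by (auto simp: IE_def)
next
  fix b assume b: "b \<in> E"
  have "xmono b \<in> delta_op d f ` IE S E" unfolding fx by (rule xmono_IE[OF b ES])
  then obtain p where p: "p \<in> IE S E" "xmono b = delta_op d f p" by (rule imageE) (rule that)
  have "xmono b b = delta_op d f p b" using p(2) by (rule fun_cong)
  then have "f (cvec (b - d)) * p (b - d) = 1"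
    unfolding delta_op_def xmono_def by simp
  then have "f (cvec (b - d)) \<noteq> 0" "p (b - d) \<noteq> 0" by auto
  then show "b - d \<in> E \<and> f (cvec (b - d)) \<noteq> 0" using p(1) by (auto simp: IE_def)
qed

lemma delta_fix_I:
  assumes ES: "E \<subseteq> S"
    and A: "\<And>a. a \<in> E \<Longrightarrow> f (cvec a) \<noteq> 0 \<Longrightarrow> a + d \<in> E"
    and B: "\<And>b. b \<in> E \<Longrightarrow> b - d \<in> E \<and> f (cvec (b - d)) \<noteq> 0"
  shows "delta_op d f ` IE S E = IE S E"
proof (intro antisym subsetI)
  fix r assume "r \<in> delta_op d f ` IE S E"
  then obtain p where p: "p \<in> IE S E" "r = delta_op d f p" by blast
  have fp: "finite {a. p a \<noteq> 0}" using p(1) by (simp add: IE_def ringR_def)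
  have sup: "c \<in> E" if "r c \<noteq> 0" for c
  proof -
    have "f (cvec (c - d)) \<noteq> 0" "p (c - d) \<noteq> 0" using that p(2) by (auto simp: delta_op_def)
    then have "c - d \<in> E" using p(1) by (auto simp: IE_def)
    then have "c - d + d \<in> E" using A \<open>f (cvec (c - d)) \<noteq> 0\<close> by blast
    then show ?thesis by simp
  qed
  have "{c. r c \<noteq> 0} \<subseteq> (\<lambda>a. a + d) ` {a. p a \<noteq> 0}"
  proof
    fix c assume "c \<in> {c. r c \<noteq> 0}"
    then have "p (c - d) \<noteq> 0" using p(2) by (auto simp: delta_op_def)
    then show "c \<in> (\<lambda>a. a + d) ` {a. p a \<noteq> 0}" by (intro image_eqI[of _ _ "c - d"]) auto
  qed
  then have "finite {c. r c \<noteq> 0}" using fp by (meson finite_imageI finite_subset)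
  then show "r \<in> IE S E" using sup ES by (auto simp: IE_def ringR_def)
next
  fix r assume r: "r \<in> IE S E"
  have fr: "finite {a. r a \<noteq> 0}" using r by (simp add: IE_def ringR_def)
  define p where "p = (\<lambda>a. if f (cvec a) = 0 then 0 else r (a + d) / f (cvec a))"
  have psup: "a \<in> E" if "p a \<noteq> 0" for a
  proof -
    have "r (a + d) \<noteq> 0" using that by (auto simp: p_def split: if_splits)
    then have "a + d \<in> E" using r by (auto simp: IE_def)
    then have "a + d - d \<in> E" using B by blast
    then show ?thesis by simp
  qed
  have "{a. p a \<noteq> 0} \<subseteq> (\<lambda>b. b - d) ` {a. r a \<noteq> 0}"
  proof
    fix a assume "a \<in> {a. p a \<noteq> 0}"
    then have "r (a + d) \<noteq> 0" by (auto simp: p_def split: if_splits)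
    then show "a \<in> (\<lambda>b. b - d) ` {a. r a \<noteq> 0}" by (intro image_eqI[of _ _ "a + d"]) auto
  qed
  then have "finite {a. p a \<noteq> 0}" using fr by (meson finite_imageI finite_subset)
  then have pI: "p \<in> IE S E" using psup ES by (auto simp: IE_def ringR_def)
  have "delta_op d f p = r"
  proof
    fix c
    show "delta_op d f p c = r c"
    proof (cases "f (cvec (c - d)) = 0")
      case True
      have "r c = 0"
      proof (rule ccontr)
        assume "r c \<noteq> 0"
        then have "c \<in> E" using r by (auto simp: IE_def)
        then show False using B True by blast
      qed
      then show ?thesis using True by (simp add: delta_op_def)
    next
      case False then show ?thesis by (simp add: delta_op_def p_def)
    qed
  qed
  then show "r \<in> delta_op d f ` IE S E" using pI by blast
qed

lemma int_max_exists:
  fixes X :: "int set"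
  assumes "X \<noteq> {}" "bdd_above X"
  shows "\<exists>k0\<in>X. \<forall>k\<in>X. k \<le> k0"
proof -
  have ne: "uminus ` X \<noteq> {}" using assms(1) by simp
  have bd: "bdd_below (uminus ` X)"
  proof -
    obtain b where "\<And>x. x \<in> X \<Longrightarrow> x \<le> b" using assms(2) by (auto simp: bdd_above_def)
    then show ?thesis by (intro bdd_belowI[of _ "- b"]) auto
  qed
  from int_min_exists[OF ne bd] obtain m where m: "m \<in> uminus ` X" "\<forall>k\<in>uminus ` X. m \<le> k" by (elim bexE)
  from m(1) obtain x where x: "x \<in> X" "m = - x" by (elim imageE)
  have "\<forall>k\<in>X. k \<le> x"
  proof
    fix k assume "k \<in> X"
    then have "m \<le> - k" using m(2) by simp
    then show "k \<le> x" using x(2) by simp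
  qed
  then show ?thesis using x(1) by (rule bexI)
qed

context mt begin

lemma vec_e1: "v + k *s e + j *s e = v + (k + j) *s e" by (simp add: vec_eq_iff algebra_simps)
lemma vec_e2: "v + k *s e + n *s (- e) = v + (k - n) *s e" by (simp add: vec_eq_iff algebra_simps)
lemma vec_e3: "v + k *s e + d = v + (k + q) *s e" by (simp add: de vec_eq_iff algebra_simps)
lemma vec_e4: "v - int j *s d = v + (- (int j * q)) *s e" by (simp add: de vec_eq_iff algebra_simps)
lemma vec_e5: "v + int j *s d = v + (int j * q) *s e" by (simp add: de vec_eq_iff algebra_simps)
lemma vec_e0: "v + 0 *s e = v" by (simp add: vec_eq_iff)

definition E0 :: "(int ^ 'n) set" where "E0 = {a\<in>S. fin a \<and> tp a \<ge> 0}"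



lemma partA:
  assumes ES: "E \<subseteq> S" and Ene: "E \<noteq> {}"
    and up: "\<And>x s. x \<in> E \<Longrightarrow> s \<in> S \<Longrightarrow> x + s \<in> E"
    and fixD: "\<And>a. a \<in> E \<Longrightarrow> (f (cvec a) \<noteq> 0 \<longleftrightarrow> a + d \<in> E)"
  shows "E = E0"
    and "\<forall>a\<in>S. val d f a > -\<infinity>"
    and "\<forall>a\<in>Vmon' d f. \<forall>i\<in>{0..q-1}. a - i *s e \<in> Vmon f"
    and "\<forall>a\<in>Vmon' d f. \<forall>b\<in>Vmon' d f. a - b \<notin> {s - e | s. s \<in> S}"
    and "splus (Vmon' d f \<inter> S) S = E"
proof -
  have down: "v + k' *s e \<in> E" if "v + k *s e \<in> E" "k' \<le> k" for v k k'
  proof -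
    have "(k - k') *s (- e) \<in> S" using that(2) nege by (intro S_nmult) auto
    then have "v + k *s e + (k - k') *s (- e) \<in> E" using up that(1) by blast
    then show ?thesis by (simp add: vec_e2)
  qed
  obtain b where b: "b \<in> E" using Ene by blast
  have A1: "\<exists>K. \<forall>k\<le>K. v + k *s e \<in> E" for v
  proof -
    obtain J :: nat where J: "\<forall>j\<ge>J. (v - b) - int j *s d \<in> S" using G3 by blast
    have "b + ((v - b) - int J *s d) \<in> E" using up b J by blast
    moreover have "b + ((v - b) - int J *s d) = v + (- (int J * q)) *s e" by (simp add: de vec_eq_iff algebra_simps)
    ultimately have "v + (- (int J * q)) *s e \<in> E" by simp
    then show ?thesis using down by blast
  qed
  have A2: "\<exists>K. \<forall>k\<ge>K. v + k *s e \<notin> E" for v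
  proof -
    obtain J :: nat where J: "\<forall>j\<ge>J. v + int j *s d \<notin> S" using G2 by blast
    have "v + k *s e \<notin> E" if "int J * q \<le> k" for k
    proof
      assume "v + k *s e \<in> E"
      then have "v + (int J * q) *s e \<in> E" using down that by blast
      then have "v + int J *s d \<in> S" using ES by (auto simp: vec_e5)
      then show False using J by blast
    qed
    then show ?thesis by blast
  qed
  define L where "L v = {k. v + k *s e \<in> E}" for v
  have Mex: "\<exists>M. M \<in> L v \<and> (\<forall>k\<in>L v. k \<le> M)" for v
  proof -
    obtain K1 where K1: "\<forall>k\<le>K1. v + k *s e \<in> E" using A1 by blast
    obtain K2 where K2: "\<forall>k\<ge>K2. v + k *s e \<notin> E" using A2 by blast
    have "L v \<noteq> {}" using K1 by (auto simp: L_def)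
    moreover have "bdd_above (L v)" using K2 unfolding L_def bdd_above_def
      by (metis linorder_le_cases mem_Collect_eq)
    ultimately show ?thesis using int_max_exists by blast
  qed
  define M where "M v = (SOME M. M \<in> L v \<and> (\<forall>k\<in>L v. k \<le> M))" for v
  have M: "M v \<in> L v" "\<forall>k\<in>L v. k \<le> M v" for v
    using someI_ex[OF Mex[of v]] by (auto simp: M_def)
  have Liff: "v + k *s e \<in> E \<longleftrightarrow> k \<le> M v" for v k
  proof
    assume "v + k *s e \<in> E" then show "k \<le> M v" using M(2) by (auto simp: L_def)
  next
    assume "k \<le> M v" then show "v + k *s e \<in> E" using down M(1) by (auto simp: L_def)
  qed
  have zsM: "k \<in> zs v \<longleftrightarrow> M v - q < k" if "k \<le> M v" for v k
  proof -
    have inE: "v + k *s e \<in> E" using that Liff by blast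
    have "k \<in> zs v \<longleftrightarrow> f (cvec (v + k *s e)) = 0" by (simp add: zs_def Vmon_def)
    also have "\<dots> \<longleftrightarrow> \<not> (v + k *s e + d \<in> E)" using fixD[OF inE] by blast
    also have "\<dots> \<longleftrightarrow> \<not> (k + q \<le> M v)" unfolding vec_e3 Liff ..
    finally show ?thesis by linarith
  qed
  have finM: "fin v \<and> tp v = M v" for v
  proof -
    have Mz: "M v \<in> zs v" using zsM[of "M v" v] q by simp
    have lb: "M v - q < k" if "k \<in> zs v" for k
    proof (cases "k \<le> M v")
      case True then show ?thesis using zsM that by blast
    next
      case False then show ?thesis using q by simp
    qed
    have fv: "fin v" unfolding fin_def using Mz lb
      by (auto simp: bdd_below_def) (metis less_imp_le)
    have lov: "lo v = M v - q + 1"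
    proof -
      have "M v - q + 1 \<in> zs v" using zsM[of "M v - q + 1" v] q by simp
      moreover have "\<forall>k\<in>zs v. M v - q + 1 \<le> k" using lb by fastforce
      ultimately show ?thesis unfolding lo_def by (intro cInf_eq_minimum) auto
    qed
    have "tp v = M v"
    proof (rule tp_unique[OF fv Mz])
      show "lo v \<le> M v" using lov q by simp
      show "M v < lo v + q" using lov by simp
      fix k' assume "k' \<in> zs v" "k' < lo v + q"
      then show "k' \<le> M v" using lov by simp
    qed
    then show ?thesis using fv by blast
  qed
  have tpE: "v \<in> E \<longleftrightarrow> 0 \<le> tp v" for v
    using Liff[of v 0] finM[of v] by (simp add: vec_e0)
  show EE0: "E = E0"
  proof (intro set_eqI iffI)
    fix x assume x: "x \<in> E"
    then have "x \<in> S" using ES by blast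
    moreover have "fin x" using finM by blast
    moreover have "0 \<le> tp x" using tpE x by blast
    ultimately show "x \<in> E0" by (simp add: E0_def)
  next
    fix x assume "x \<in> E0"
    then have "0 \<le> tp x" by (simp add: E0_def)
    then show "x \<in> E" using tpE by blast
  qed
  show "\<forall>a\<in>S. val d f a > -\<infinity>"
  proof
    fix a assume "a \<in> S"
    have "fin a" using finM by blast
    then show "val d f a > -\<infinity>" unfolding val_gt_iff fin_def by simp
  qed
  show "\<forall>a\<in>Vmon' d f. \<forall>i\<in>{0..q-1}. a - i *s e \<in> Vmon f"
  proof (intro ballI)
    fix a i assume a: "a \<in> Vmon' d f" and i: "i \<in> {0..q-1}"
    then obtain v where v: "fin v" "a = v + tp v *s e" by (auto simp: Vmon'_eq)
    have "tp v - i \<in> zs v" using zsM[of "tp v - i" v] i finM[of v] by simp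
    then have mem: "v + (tp v - i) *s e \<in> Vmon f" unfolding zs_def by (rule CollectD)
    have eq: "a - i *s e = v + (tp v - i) *s e" using v(2) by (simp add: vec_eq_iff algebra_simps)
    show "a - i *s e \<in> Vmon f" unfolding eq by (rule mem)
  qed
  have VE: "a \<in> E \<and> a + e \<notin> E" if aV: "a \<in> Vmon' d f" for a
  proof -
    obtain v where v: "fin v" "a = v + tp v *s e" using aV by (auto simp: Vmon'_eq)
    have "a \<in> E" using v finM Liff by simp
    moreover have ae: "a + e = v + (M v + 1) *s e" using v finM by (simp add: vec_eq_iff algebra_simps)
    have "v + (M v + 1) *s e \<notin> E" using Liff[of v "M v + 1"] by simp
    then have "a + e \<notin> E" unfolding ae .
    ultimately show ?thesis by blast
  qed
  show "\<forall>a\<in>Vmon' d f. \<forall>b\<in>Vmon' d f. a - b \<notin> {s - e | s. s \<in> S}"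
  proof (intro ballI notI)
    fix a b assume a: "a \<in> Vmon' d f" and bb: "b \<in> Vmon' d f" and "a - b \<in> {s - e | s. s \<in> S}"
    then obtain s where s: "s \<in> S" "a - b = s - e" by blast
    have "b + s \<in> E" using VE[OF bb] s up by blast
    moreover have "b + s = a + e" using s(2) by (simp add: vec_eq_iff algebra_simps)
    ultimately show False using VE[OF a] by simp
  qed
  show "splus (Vmon' d f \<inter> S) S = E"
  proof (intro antisym subsetI)
    fix x assume "x \<in> splus (Vmon' d f \<inter> S) S"
    then obtain a s where "a \<in> Vmon' d f" "s \<in> S" "x = a + s" by (auto simp: splus_def)
    then show "x \<in> E" using VE up by blast
  next
    fix x assume x: "x \<in> E"
    define a where "a = x + tp x *s e"
    have aV: "a \<in> Vmon' d f" unfolding Vmon'_eq a_def using finM[of x] by blast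
    have aS: "a \<in> S" using VE[OF aV] ES by blast
    have tp0: "0 \<le> tp x" using tpE x by blast
    have "tp x *s (- e) \<in> S" using tp0 nege by (intro S_nmult)
    moreover have "x = a + tp x *s (- e)" by (simp add: a_def vec_eq_iff)
    ultimately show "x \<in> splus (Vmon' d f \<inter> S) S" using aV aS unfolding splus_def by blast
  qed
qed

end

context mt begin

lemma partB:
  assumes c1: "\<forall>a\<in>S. val d f a > -\<infinity>"
    and c2: "\<forall>a\<in>Vmon' d f. \<forall>i\<in>{0..q-1}. a - i *s e \<in> Vmon f"
    and c3: "\<forall>a\<in>Vmon' d f. \<forall>b\<in>Vmon' d f. a - b \<notin> {s - e | s. s \<in> S}"
  shows "E0 \<subseteq> S" and "E0 \<noteq> {}"
    and "\<And>x s. x \<in> E0 \<Longrightarrow> s \<in> S \<Longrightarrow> x + s \<in> E0"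
    and "\<And>a. a \<in> E0 \<Longrightarrow> (f (cvec a) \<noteq> 0 \<longleftrightarrow> a + d \<in> E0)"
proof -
  have B0: "fin x" if xS: "x \<in> S" for x
  proof -
    obtain J :: nat where J: "\<forall>j\<ge>J. x + int j *s d \<notin> S" using G2 by blast
    define P where "P = {j::nat. x + int j *s d \<in> S}"
    have P0: "0 \<in> P" using xS by (simp add: P_def)
    have PJ: "P \<subseteq> {..<J}"
    proof
      fix j assume "j \<in> P"
      then have "\<not> J \<le> j" using J by (auto simp: P_def)
      then show "j \<in> {..<J}" by simp
    qed
    have fP: "finite P" using PJ finite_subset by blast
    define j0 where "j0 = Max P"
    have j0P: "j0 \<in> P" unfolding j0_def using fP P0 by (intro Max_in) auto
    have j1: "Suc j0 \<notin> P"
    proof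
      assume "Suc j0 \<in> P"
      then have "Suc j0 \<le> j0" unfolding j0_def by (rule Max_ge[OF fP])
      then show False by simp
    qed
    have "x + int j0 *s d \<in> S" using j0P by (simp add: P_def)
    moreover have "x + int j0 *s d + d \<notin> S"
    proof -
      have eq: "x + int j0 *s d + d = x + int (Suc j0) *s d" by (simp add: vec_eq_iff algebra_simps)
      have "x + int (Suc j0) *s d \<notin> S" using j1 unfolding P_def by (rule contrapos_nn) (rule CollectI)
      then show ?thesis unfolding eq .
    qed
    ultimately have "f (cvec (x + int j0 *s d)) = 0" by (rule G1)
    then have "int j0 * q \<in> zs x" by (simp add: zs_def Vmon_def vec_e5)
    then have ne: "zs x \<noteq> {}" by blast
    have "val d f x > -\<infinity>" using c1 xS by blast
    then have "zs x = {} \<or> bdd_below (zs x)" unfolding val_gt_iff .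
    then have "bdd_below (zs x)" using ne by simp
    then show ?thesis using ne by (simp add: fin_def)
  qed
  have B1: "tp x - i \<in> zs x" if fx: "fin x" and i: "0 \<le> i" "i \<le> q - 1" for x i
  proof -
    have bV: "x + tp x *s e \<in> Vmon' d f" unfolding Vmon'_eq using fx by blast
    then have "x + tp x *s e - i *s e \<in> Vmon f" using c2 i by auto
    moreover have "x + tp x *s e - i *s e = x + (tp x - i) *s e" by (simp add: vec_eq_iff algebra_simps)
    ultimately show ?thesis by (simp add: zs_def)
  qed
  have B1lo: "lo x = tp x - q + 1" if fx: "fin x" for x
  proof -
    have "tp x - (q - 1) \<in> zs x" using B1[OF fx, of "q - 1"] q by simp
    then have "lo x \<le> tp x - q + 1" using lo_prop(2)[OF fx] by fastforce
    moreover have "tp x < lo x + q" using tp_prop(3)[OF fx] .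
    ultimately show ?thesis by linarith
  qed
  have zero: "f (cvec x) = 0 \<longleftrightarrow> 0 \<in> zs x" for x by (simp add: zs_def Vmon_def vec_eq_iff)
  show "E0 \<subseteq> S" by (auto simp: E0_def)
  show "E0 \<noteq> {}"
  proof -
    have f0: "fin 0" using B0 S0 by blast
    define N where "N = nat (- tp 0)"
    define x :: "int ^ 'n" where "x = (- (int N * q)) *s e"
    have "int N *s (- d) \<in> S" using negd by (intro S_nmult) auto
    moreover have "int N *s (- d) = x" by (simp add: x_def de vec_eq_iff)
    ultimately have xS: "x \<in> S" by simp
    have x0: "x = 0 + (- (int N * q)) *s e" by (simp add: x_def)
    have fx: "fin x" using f0 x0 fin_shift by metis
    have "tp x = tp 0 + int N * q" using tp_shift[OF f0, of "- (int N * q)"] x0 by simp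
    moreover have "int N * q \<ge> int N" using q by (simp add: mult_le_cancel_left1)
    moreover have "int N \<ge> - tp 0" by (simp add: N_def)
    ultimately have "tp x \<ge> 0" by linarith
    then have "x \<in> E0" using xS fx by (simp add: E0_def)
    then show ?thesis by blast
  qed
  show up: "x + s \<in> E0" if x: "x \<in> E0" and s: "s \<in> S" for x s
  proof -
    have xS: "x \<in> S" and fx: "fin x" and tx: "0 \<le> tp x" using x by (auto simp: E0_def)
    have xsS: "x + s \<in> S" using xS s S_add by blast
    have fxs: "fin (x + s)" using B0 xsS by blast
    have "0 \<le> tp (x + s)"
    proof (rule ccontr)
      assume neg: "\<not> 0 \<le> tp (x + s)"
      define a where "a = x + tp x *s e"
      define b where "b = (x + s) + tp (x + s) *s e"
      have aV: "a \<in> Vmon' d f" unfolding Vmon'_eq a_def using fx by blast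
      have bV: "b \<in> Vmon' d f" unfolding Vmon'_eq b_def using fxs by blast
      define n where "n = tp x - tp (x + s) - 1"
      have n0: "0 \<le> n" using neg tx by (simp add: n_def)
      have "n *s (- e) \<in> S" using n0 nege by (intro S_nmult)
      then have s'S: "s + n *s (- e) \<in> S" using s S_add by blast
      have "b - a = (s + n *s (- e)) - e" by (simp add: a_def b_def n_def vec_eq_iff algebra_simps)
      then have "b - a \<in> {s - e | s. s \<in> S}" using s'S by blast
      then show False using c3 aV bV by blast
    qed
    then show ?thesis using xsS fxs by (simp add: E0_def)
  qed
  show "f (cvec a) \<noteq> 0 \<longleftrightarrow> a + d \<in> E0" if a: "a \<in> E0" for a
  proof -
    have aS: "a \<in> S" and fa: "fin a" and ta: "0 \<le> tp a" using a by (auto simp: E0_def)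
    have ad: "a + d = a + q *s e" by (simp add: de)
    have fad: "fin (a + d)" using fa ad fin_shift by metis
    have tpad: "tp (a + d) = tp a - q" using tp_shift[OF fa, of q] ad by simp
    show ?thesis
    proof (cases "q \<le> tp a")
      case True
      have "0 \<notin> zs a"
      proof
        assume "0 \<in> zs a"
        then have "lo a \<le> 0" using lo_prop(2)[OF fa] by blast
        then show False using B1lo[OF fa] True by simp
      qed
      then have fnz: "f (cvec a) \<noteq> 0" using zero by blast
      then have "a + d \<in> S" using G1 aS by blast
      then have "a + d \<in> E0" using fad tpad True by (simp add: E0_def)
      then show ?thesis using fnz by blast
    next
      case False
      have "tp a - tp a \<in> zs a" using B1[OF fa, of "tp a"] ta False by simp
      then have "f (cvec a) = 0" using zero by simp
      moreover have "a + d \<notin> E0" using tpad False by (simp add: E0_def)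
      ultimately show ?thesis by blast
    qed
  qed
qed

lemma splus_E0: "E0 \<subseteq> S \<Longrightarrow> (\<And>x s. x \<in> E0 \<Longrightarrow> s \<in> S \<Longrightarrow> x + s \<in> E0) \<Longrightarrow> splus E0 S = E0"
proof (intro antisym subsetI)
  fix x assume "x \<in> splus E0 S" "\<And>x s. x \<in> E0 \<Longrightarrow> s \<in> S \<Longrightarrow> x + s \<in> E0"
  then show "x \<in> E0" by (auto simp: splus_def)
next
  fix x assume "x \<in> E0"
  then show "x \<in> splus E0 S" using S0 unfolding splus_def by (intro CollectI exI[of _ x] exI[of _ 0]) simp
qed

lemma fixed_imp:
  assumes mon: "monomial_ideal S J" and nz: "J \<noteq> {\<lambda>c. 0}" and fx: "delta_op d f ` J = J"
  shows "J = IE S E0"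
    and "\<forall>a\<in>S. val d f a > -\<infinity>"
    and "\<forall>a\<in>Vmon' d f. \<forall>i\<in>{0..q-1}. a - i *s e \<in> Vmon f"
    and "\<forall>a\<in>Vmon' d f. \<forall>b\<in>Vmon' d f. a - b \<notin> {s - e | s. s \<in> S}"
    and "splus (Vmon' d f \<inter> S) S = E0"
proof -
  obtain X where X: "X \<subseteq> S" "J = mono_gen_ideal S X" using mon by (auto simp: monomial_ideal_def)
  define E where "E = splus X S"
  have JE: "J = IE S E" unfolding E_def X(2) using S0 S_add X(1) by (rule mono_gen_IE)
  have ES: "E \<subseteq> S" using X(1) S_add by (auto simp: E_def splus_def)
  have up: "x + s \<in> E" if "x \<in> E" "s \<in> S" for x s
  proof -
    from that(1) obtain y t where "y \<in> X" "t \<in> S" "x = y + t" unfolding E_def splus_def by blast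
    then show ?thesis using that(2) S_add unfolding E_def splus_def
      by (intro CollectI exI[of _ y] exI[of _ "t + s"]) (simp add: add.assoc)
  qed
  have Ene: "E \<noteq> {}" using nz JE IE_empty by auto
  have fx': "delta_op d f ` IE S E = IE S E" using fx JE by simp
  have fixD: "f (cvec a) \<noteq> 0 \<longleftrightarrow> a + d \<in> E" if "a \<in> E" for a
  proof
    assume "f (cvec a) \<noteq> 0" then show "a + d \<in> E" using delta_fix_D(1)[OF fx' ES that] by blast
  next
    assume "a + d \<in> E"
    then have "f (cvec (a + d - d)) \<noteq> 0" using delta_fix_D(2)[OF fx' ES] by blast
    then show "f (cvec a) \<noteq> 0" by simp
  qed
  note A = partA[OF ES Ene up fixD]
  show "J = IE S E0" using JE A(1) by simp
  show "\<forall>a\<in>S. val d f a > -\<infinity>" by (rule A(2))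
  show "\<forall>a\<in>Vmon' d f. \<forall>i\<in>{0..q-1}. a - i *s e \<in> Vmon f" by (rule A(3))
  show "\<forall>a\<in>Vmon' d f. \<forall>b\<in>Vmon' d f. a - b \<notin> {s - e | s. s \<in> S}" by (rule A(4))
  show "splus (Vmon' d f \<inter> S) S = E0" using A(5) A(1) by simp
qed

lemma E0_fixed:
  assumes c1: "\<forall>a\<in>S. val d f a > -\<infinity>"
    and c2: "\<forall>a\<in>Vmon' d f. \<forall>i\<in>{0..q-1}. a - i *s e \<in> Vmon f"
    and c3: "\<forall>a\<in>Vmon' d f. \<forall>b\<in>Vmon' d f. a - b \<notin> {s - e | s. s \<in> S}"
  shows "monomial_ideal S (IE S E0) \<and> IE S E0 \<noteq> {\<lambda>c. 0} \<and> delta_op d f ` IE S E0 = IE S E0"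
proof -
  note B = partB[OF c1 c2 c3]
  have "mono_gen_ideal S E0 = IE S (splus E0 S)" using S0 S_add B(1) by (rule mono_gen_IE)
  also have "splus E0 S = E0" using B(1) B(3) by (rule splus_E0)
  finally have "monomial_ideal S (IE S E0)" using B(1) unfolding monomial_ideal_def by metis
  moreover have "IE S E0 \<noteq> {\<lambda>c. 0}" using B(2) B(1) by (rule IE_nonzero)
  moreover have "delta_op d f ` IE S E0 = IE S E0"
  proof (rule delta_fix_I[OF B(1)])
    show "a + d \<in> E0" if "a \<in> E0" "f (cvec a) \<noteq> 0" for a using B(4) that by blast
    show "b - d \<in> E0 \<and> f (cvec (b - d)) \<noteq> 0" if b: "b \<in> E0" for b
    proof -
      have "b + - d \<in> E0" using B(3)[OF b negd] .
      then have bd: "b - d \<in> E0" by simp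
      moreover have "(b - d) + d \<in> E0" using b by simp
      then have "f (cvec (b - d)) \<noteq> 0" using B(4)[OF bd] by blast
      ultimately show ?thesis by blast
    qed
  qed
  ultimately show ?thesis by blast
qed

lemma Exp_formal: "{a\<in>S. val d f a \<noteq> \<infinity> \<and> val d f a \<noteq> -\<infinity> \<and> pval d f a \<ge> 0} = E0"
proof (intro set_eqI iffI)
  fix a assume "a \<in> {a\<in>S. val d f a \<noteq> \<infinity> \<and> val d f a \<noteq> -\<infinity> \<and> pval d f a \<ge> 0}"
  then have a: "a \<in> S" "fin a" "pval d f a \<ge> 0" using val_finite_iff by auto
  then have "real_of_int (tp a) / real_of_int q \<ge> 0" using pval_fin by simp
  then have "tp a \<ge> 0" using q by (simp add: zero_le_divide_iff)
  then show "a \<in> E0" using a by (simp add: E0_def)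
next
  fix a assume "a \<in> E0"
  then have a: "a \<in> S" "fin a" "tp a \<ge> 0" by (auto simp: E0_def)
  then have "pval d f a \<ge> 0" using pval_fin q by simp
  then show "a \<in> {a\<in>S. val d f a \<noteq> \<infinity> \<and> val d f a \<noteq> -\<infinity> \<and> pval d f a \<ge> 0}"
    using a val_finite_iff by auto
qed

lemma main_thm:
  shows "((\<exists>I. monomial_ideal (semigrp \<sigma>) I \<and> I \<noteq> {\<lambda>c. 0} \<and> delta_op d f ` I = I)
       \<longleftrightarrow>
         ((\<forall>a\<in>semigrp \<sigma>. val d f a > -\<infinity>)
        \<and> (\<forall>a\<in>Vmon' d f. \<forall>i\<in>{0..q-1}. a - i *s e \<in> Vmon f)
        \<and> (\<forall>a\<in>Vmon' d f. \<forall>b\<in>Vmon' d f. a - b \<notin> {s - e | s. s \<in> semigrp \<sigma>})))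
     \<and> ((\<exists>I. monomial_ideal (semigrp \<sigma>) I \<and> I \<noteq> {\<lambda>c. 0} \<and> delta_op d f ` I = I) \<longrightarrow>
         ((\<forall>J. (monomial_ideal (semigrp \<sigma>) J \<and> J \<noteq> {\<lambda>c. 0} \<and> delta_op d f ` J = J)
              \<longleftrightarrow> J = mono_gen_ideal (semigrp \<sigma>) (Vmon' d f \<inter> semigrp \<sigma>))
       \<and> Exp (semigrp \<sigma>) (mono_gen_ideal (semigrp \<sigma>) (Vmon' d f \<inter> semigrp \<sigma>))
           = {a\<in>semigrp \<sigma>. val d f a \<noteq> \<infinity> \<and> val d f a \<noteq> -\<infinity> \<and> pval d f a \<ge> 0}))"
proof (intro conjI impI)
  show "(\<exists>I. monomial_ideal S I \<and> I \<noteq> {\<lambda>c. 0} \<and> delta_op d f ` I = I)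
       \<longleftrightarrow>
         ((\<forall>a\<in>S. val d f a > -\<infinity>)
        \<and> (\<forall>a\<in>Vmon' d f. \<forall>i\<in>{0..q-1}. a - i *s e \<in> Vmon f)
        \<and> (\<forall>a\<in>Vmon' d f. \<forall>b\<in>Vmon' d f. a - b \<notin> {s - e | s. s \<in> S}))"
  proof
    assume "\<exists>I. monomial_ideal S I \<and> I \<noteq> {\<lambda>c. 0} \<and> delta_op d f ` I = I"
    then obtain I where I: "monomial_ideal S I" "I \<noteq> {\<lambda>c. 0}" "delta_op d f ` I = I" by blast
    show "(\<forall>a\<in>S. val d f a > -\<infinity>)
        \<and> (\<forall>a\<in>Vmon' d f. \<forall>i\<in>{0..q-1}. a - i *s e \<in> Vmon f)
        \<and> (\<forall>a\<in>Vmon' d f. \<forall>b\<in>Vmon' d f. a - b \<notin> {s - e | s. s \<in> S})"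
      using fixed_imp(2,3,4)[OF I] by blast
  next
    assume c: "(\<forall>a\<in>S. val d f a > -\<infinity>)
        \<and> (\<forall>a\<in>Vmon' d f. \<forall>i\<in>{0..q-1}. a - i *s e \<in> Vmon f)
        \<and> (\<forall>a\<in>Vmon' d f. \<forall>b\<in>Vmon' d f. a - b \<notin> {s - e | s. s \<in> S})"
    show "\<exists>I. monomial_ideal S I \<and> I \<noteq> {\<lambda>c. 0} \<and> delta_op d f ` I = I"
      using E0_fixed c by blast
  qed
next
  assume "\<exists>I. monomial_ideal S I \<and> I \<noteq> {\<lambda>c. 0} \<and> delta_op d f ` I = I"
  then obtain I where I: "monomial_ideal S I" "I \<noteq> {\<lambda>c. 0}" "delta_op d f ` I = I" by blast
  have IE0: "I = IE S E0" using fixed_imp(1)[OF I] .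
  have VS: "Vmon' d f \<inter> S \<subseteq> S" by blast
  have mg: "mono_gen_ideal S (Vmon' d f \<inter> S) = IE S E0"
    using mono_gen_IE[OF S0 S_add VS] fixed_imp(5)[OF I] by simp
  show "\<forall>J. (monomial_ideal S J \<and> J \<noteq> {\<lambda>c. 0} \<and> delta_op d f ` J = J)
              \<longleftrightarrow> J = mono_gen_ideal S (Vmon' d f \<inter> S)"
  proof (intro allI iffI)
    fix J assume "monomial_ideal S J \<and> J \<noteq> {\<lambda>c. 0} \<and> delta_op d f ` J = J"
    then have "J = IE S E0" using fixed_imp(1) by blast
    then show "J = mono_gen_ideal S (Vmon' d f \<inter> S)" using mg by simp
  next
    fix J assume "J = mono_gen_ideal S (Vmon' d f \<inter> S)"
    then have "J = I" using mg IE0 by simp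
    then show "monomial_ideal S J \<and> J \<noteq> {\<lambda>c. 0} \<and> delta_op d f ` J = J" using I by simp
  qed
  have E0S: "E0 \<subseteq> S" by (auto simp: E0_def)
  show "Exp S (mono_gen_ideal S (Vmon' d f \<inter> S))
           = {a\<in>S. val d f a \<noteq> \<infinity> \<and> val d f a \<noteq> -\<infinity> \<and> pval d f a \<ge> 0}"
    unfolding mg Exp_IE[OF E0S] Exp_formal ..
qed

end

theorem mainTheorem10:
  fixes \<sigma> :: "(real ^ 'n) set"
    and f :: "complex ^ 'n \<Rightarrow> complex"
    and d e :: "int ^ 'n"
    and q :: int
  assumes cone: "rational_polyhedral_cone \<sigma>"
    and full: "full_dimensional \<sigma>"
    and strong: "strongly_convex \<sigma>"
    and fpoly: "poly_fun f"
    and fdiv: "poly_dvd (Hpoly \<sigma> d) f"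
    and dint: "rvec (- d) \<in> interior (dual_cone \<sigma>)"
    and q: "q \<ge> 1" and e: "primitive e" and de: "d = q *s e"
  shows "((\<exists>I. monomial_ideal (semigrp \<sigma>) I \<and> I \<noteq> {\<lambda>c. 0} \<and> delta_op d f ` I = I)
       \<longleftrightarrow>
         ((\<forall>a\<in>semigrp \<sigma>. val d f a > -\<infinity>)
        \<and> (\<forall>a\<in>Vmon' d f. \<forall>i\<in>{0..q-1}. a - i *s e \<in> Vmon f)
        \<and> (\<forall>a\<in>Vmon' d f. \<forall>b\<in>Vmon' d f. a - b \<notin> {s - e | s. s \<in> semigrp \<sigma>})))
     \<and> ((\<exists>I. monomial_ideal (semigrp \<sigma>) I \<and> I \<noteq> {\<lambda>c. 0} \<and> delta_op d f ` I = I) \<longrightarrow>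
         ((\<forall>J. (monomial_ideal (semigrp \<sigma>) J \<and> J \<noteq> {\<lambda>c. 0} \<and> delta_op d f ` J = J)
              \<longleftrightarrow> J = mono_gen_ideal (semigrp \<sigma>) (Vmon' d f \<inter> semigrp \<sigma>))
       \<and> Exp (semigrp \<sigma>) (mono_gen_ideal (semigrp \<sigma>) (Vmon' d f \<inter> semigrp \<sigma>))
           = {a\<in>semigrp \<sigma>. val d f a \<noteq> \<infinity> \<and> val d f a \<noteq> -\<infinity> \<and> pval d f a \<ge> 0}))"
proof -
  have "mt \<sigma> f d e q" unfolding mt_def using cone full fdiv dint q e de by blast
  then show ?thesis by (rule mt.main_thm)
qed

end
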